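(* Let $n$ be a positive integer, let $\mathcal{T}_n$ be the transducer defined below and let $\mathcal{T}'_n$ be the trimmed result of the specialized determinization of $\mathcal{T}_n$. Then: (1) $\mathcal{T}'_n$ has at least $(2n+3)2^{n-2}$ states; (2) the accessible subset-construction determinization of the underlying automaton of $\mathcal{T}'_n$ has at least $n!+2$ states; (3) the accessible subset-construction determinization of the reversed underlying automaton of $\mathcal{T}'_n$ has at least $2^n+n$ states.
   Context: Let $\Sigma_n=\{a_1,\dots,a_n\}$ and let the output monoid be the free monoid $\{1\}^*$. $\mathcal{T}_n=\langle\Sigma_n^*\times\{1\}^*,Q,\{s\},\{f\},\Delta_n\rangle$ with $Q=\{s,q_1,\dots,q_n,f\}$ and $\Delta_n=\Delta_{s,n}\cup\Delta_{Q_n}\cup\Delta_{f,n}$ where: $\Delta_{s,n}=\{\langle s,\langle a_j,1^{i-1}\rangle,q_i\rangle:1\le i,j\le n\}$; $\Delta_{Q_n}$ consists, for all $1\le i,j\le n$, of $\langle q_i,\langle a_j,1^n\rangle,q_i\rangle$ if $i\notin\{1,j\}$, $\langle q_1,\langle a_j,1^{n+j-1}\rangle,q_j\rangle$ if $i=1$, and $\langle q_j,\langle a_j,1^{n-j+1}\rangle,q_1\rangle$ if $i=j\neq1$; $\Delta_{f,n}=\{\langle q_i,\langle a_j,1^{2n-i+1}\rangle,f\rangle:1\le j\le i\le n\}$. Specialized determinization (for a transducer with single initial state $i$ over $\Sigma\times\Omega^*$; here $\Omega=\{1\}$ with strict lexicographic order $1^k\prec1^l$ iff $k<l$): states are pairs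 $\langle p,N\rangle\in Q\times2^Q$, generated inductively from $\langle i,\emptyset\rangle$: for a generated $\langle p,N\rangle$ and $\langle p,\langle a,v\rangle,p'\rangle\in\Delta$ let $N'=\{q':\exists q\in N,\exists v'\ \langle q,\langle a,v'\rangle,q'\rangle\in\Delta\}\cup\{q:\exists v'\prec v\ \langle p,\langle a,v'\rangle,q\rangle\in\Delta\}$; if $p'\notin N'$ add state $\langle p',N'\rangle$ and transition $\langle\langle p,N\rangle,\langle a,v\rangle,\langle p',N'\rangle\rangle$. Final states are $\{\langle f,N\rangle:f\in F,\ N\cap F=\emptyset\}$. Trimming keeps only accessible and co-accessible states. The underlying automaton of a transducer is the automaton over $\Sigma$ with transitions $\langle p,a,q\rangle$ for each $\langle p,\langle a,m\rangle,q\rangle\in\Delta$ (same states, initial and final states); its reversal swaps initial and final states and reverses transitions. The accessible subset-construction determinization has as states the subsets reachable from the set of initial states via $\delta(P,a)=\{q:\exists p\in P\ \langle p,a,q\rangle\}$. *)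

theory Defs
  imports Complex_Main
begin

record ('s, 'l) aut =
  states :: "'s set"
  inits  :: "'s set"
  finals :: "'s set"
  trans  :: "('s \<times> 'l \<times> 's) set"

(* States: S = s, Q i = q_i, Fin = f.  Letter a_j is encoded by j :: nat,
   output word 1^k in the free monoid {1}^* is encoded by k :: nat. *)
datatype st = S | Q nat | Fin

definition Delta :: "nat \<Rightarrow> (st \<times> (nat \<times> nat) \<times> st) set" where
  "Delta n =
     {(S, (j, i - 1), Q i) | i j. 1 \<le> i \<and> i \<le> n \<and> 1 \<le> j \<and> j \<le> n}
   \<union> {(Q i, (j, n), Q i) | i j. 1 \<le> i \<and> i \<le> n \<and> 1 \<le> j \<and> j \<le> n \<and> i \<notin> {1, j}}
   \<union> {(Q 1, (j, n + j - 1), Q j) | j. 1 \<le> j \<and> j \<le> n}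
   \<union> {(Q j, (j, n - j + 1), Q 1) | j. 1 \<le> j \<and> j \<le> n \<and> j \<noteq> 1}
   \<union> {(Q i, (j, 2 * n - i + 1), Fin) | i j. 1 \<le> j \<and> j \<le> i \<and> i \<le> n}"

definition Tn :: "nat \<Rightarrow> (st, nat \<times> nat) aut" where
  "Tn n = \<lparr> states = {S, Fin} \<union> Q ` {1..n}, inits = {S}, finals = {Fin}, trans = Delta n \<rparr>"

(* Output words 1^k are encoded by k; the strict lexicographic order 1^k < 1^l is k < l. *)
definition sd_succ :: "('q \<times> ('a \<times> nat) \<times> 'q) set \<Rightarrow> 'q set \<Rightarrow> 'q \<Rightarrow> 'a \<Rightarrow> nat \<Rightarrow> 'q set" where
  "sd_succ D N p a v =
     {q'. \<exists>q\<in>N. \<exists>v'. (q, (a, v'), q') \<in> D} \<union> {q. \<exists>v'. v' < v \<and> (p, (a, v'), q) \<in> D}"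

inductive_set sd_states :: "('q \<times> ('a \<times> nat) \<times> 'q) set \<Rightarrow> 'q \<Rightarrow> ('q \<times> 'q set) set"
  for D :: "('q \<times> ('a \<times> nat) \<times> 'q) set" and i :: 'q where
  init: "(i, {}) \<in> sd_states D i"
| step: "\<lbrakk>(p, N) \<in> sd_states D i; (p, (a, v), p') \<in> D; p' \<notin> sd_succ D N p a v\<rbrakk>
         \<Longrightarrow> (p', sd_succ D N p a v) \<in> sd_states D i"

definition sd_trans :: "('q \<times> ('a \<times> nat) \<times> 'q) set \<Rightarrow> 'q
    \<Rightarrow> (('q \<times> 'q set) \<times> ('a \<times> nat) \<times> ('q \<times> 'q set)) set" where
  "sd_trans D i = {((p, N), (a, v), (p', sd_succ D N p a v)) | p N a v p'.
       (p, N) \<in> sd_states D i \<and> (p, (a, v), p') \<in> D \<and> p' \<notin> sd_succ D N p a v}"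

definition spec_det :: "('q, 'a \<times> nat) aut \<Rightarrow> 'q \<Rightarrow> ('q \<times> 'q set, 'a \<times> nat) aut" where
  "spec_det T i = \<lparr> states = sd_states (trans T) i,
                    inits = {(i, {})},
                    finals = {(f, N) | f N. (f, N) \<in> sd_states (trans T) i \<and> f \<in> finals T \<and> N \<inter> finals T = {}},
                    trans = sd_trans (trans T) i \<rparr>"

definition edge_rel :: "('s, 'l) aut \<Rightarrow> ('s \<times> 's) set" where
  "edge_rel A = {(p, q). \<exists>l. (p, l, q) \<in> trans A}"

definition accessible :: "('s, 'l) aut \<Rightarrow> 's set" where
  "accessible A = {q \<in> states A. \<exists>p \<in> inits A. (p, q) \<in> (edge_rel A)\<^sup>*}"

definition coaccessible :: "('s, 'l) aut \<Rightarrow> 's set" where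
  "coaccessible A = {p \<in> states A. \<exists>q \<in> finals A. (p, q) \<in> (edge_rel A)\<^sup>*}"

definition trim :: "('s, 'l) aut \<Rightarrow> ('s, 'l) aut" where
  "trim A = (let K = accessible A \<inter> coaccessible A in
     \<lparr> states = K, inits = inits A \<inter> K, finals = finals A \<inter> K,
       trans = {(p, l, q). (p, l, q) \<in> trans A \<and> p \<in> K \<and> q \<in> K} \<rparr>)"

definition Tn' :: "nat \<Rightarrow> (st \<times> st set, nat \<times> nat) aut" where
  "Tn' n = trim (spec_det (Tn n) S)"

definition underlying :: "('s, 'a \<times> 'o) aut \<Rightarrow> ('s, 'a) aut" where
  "underlying T = \<lparr> states = states T, inits = inits T, finals = finals T,
                    trans = {(p, a, q). \<exists>m. (p, (a, m), q) \<in> trans T} \<rparr>"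

definition reversal :: "('s, 'a) aut \<Rightarrow> ('s, 'a) aut" where
  "reversal A = \<lparr> states = states A, inits = finals A, finals = inits A,
                  trans = {(q, a, p). (p, a, q) \<in> trans A} \<rparr>"

definition subset_step :: "('s, 'a) aut \<Rightarrow> 's set \<Rightarrow> 'a \<Rightarrow> 's set" where
  "subset_step A P a = {q. \<exists>p\<in>P. (p, a, q) \<in> trans A}"

inductive_set subset_det_states :: "'a set \<Rightarrow> ('s, 'a) aut \<Rightarrow> 's set set"
  for Sigma :: "'a set" and A :: "('s, 'a) aut" where
  init: "inits A \<in> subset_det_states Sigma A"
| step: "\<lbrakk>P \<in> subset_det_states Sigma A; a \<in> Sigma\<rbrakk> \<Longrightarrow> subset_step A P a \<in> subset_det_states Sigma A"

end

theory Submission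
  imports Defs "HOL-Combinatorics.Permutations"
begin

definition sg :: "nat \<Rightarrow> nat \<Rightarrow> nat" where
  "sg j k = (if k = 1 then j else if k = j then 1 else k)"
definition outQ :: "nat \<Rightarrow> nat \<Rightarrow> nat \<Rightarrow> nat" where
  "outQ n j k = (if k = 1 then n + j - 1 else if k = j then n - j + 1 else n)"
definition fl :: "bool \<Rightarrow> st set" where
  "fl b = (if b then {Fin} else {})"

lemma Delta_Q: "(Q k, (j, v), q) \<in> Delta n \<longleftrightarrow> 1 \<le> k \<and> k \<le> n \<and> 1 \<le> j \<and> j \<le> n \<and>
   ((q = Q (sg j k) \<and> v = outQ n j k) \<or> (q = Fin \<and> j \<le> k \<and> v = 2*n-k+1))"
  unfolding Delta_def sg_def outQ_def by auto

lemma Delta_S: "(S, (j, v), q) \<in> Delta n \<longleftrightarrow> 1 \<le> j \<and> j \<le> n \<and> (\<exists>i. 1 \<le> i \<and> i \<le> n \<and> q = Q i \<and> v = i - 1)"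
  unfolding Delta_def by auto

lemma Delta_F: "(Fin, l, q) \<notin> Delta n"
  unfolding Delta_def by auto

lemma Delta_notS: "(p, l, S) \<notin> Delta n"
  unfolding Delta_def by auto

lemma sg_sg[simp]: "sg j (sg j k) = k"
  unfolding sg_def by auto

lemma sg_inj: "inj (sg j)"
  by (metis injI sg_sg)

lemma sg_eq_iff[simp]: "sg j a = sg j b \<longleftrightarrow> a = b"
  by (metis sg_sg)

lemma sg_range: "1 \<le> j \<Longrightarrow> j \<le> n \<Longrightarrow> 1 \<le> k \<Longrightarrow> k \<le> n \<Longrightarrow> 1 \<le> sg j k \<and> sg j k \<le> n"
  unfolding sg_def by auto

lemma outQ_lt: "1 \<le> k \<Longrightarrow> k \<le> n \<Longrightarrow> 1 \<le> j \<Longrightarrow> j \<le> n \<Longrightarrow> outQ n j k < 2*n-k+1"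
  unfolding outQ_def by auto

lemma fl_simps[simp]: "Fin \<in> fl b \<longleftrightarrow> b" "Q k \<notin> fl b" "S \<notin> fl b"
  unfolding fl_def by auto

lemma img: assumes "I \<subseteq> {1..n}" "1 \<le> j" "j \<le> n"
  shows "{q'. \<exists>q\<in>Q`I \<union> fl b. \<exists>v'. (q,(j,v'),q') \<in> Delta n} = Q`sg j`I \<union> fl (\<exists>m\<in>I. j \<le> m)"
proof (rule set_eqI)
  fix x
  show "x \<in> {q'. \<exists>q\<in>Q`I \<union> fl b. \<exists>v'. (q,(j,v'),q') \<in> Delta n} \<longleftrightarrow> x \<in> Q`sg j`I \<union> fl (\<exists>m\<in>I. j \<le> m)"
  proof
    assume "x \<in> {q'. \<exists>q\<in>Q`I \<union> fl b. \<exists>v'. (q,(j,v'),q') \<in> Delta n}"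
    then obtain q v' where q: "q \<in> Q`I \<union> fl b" "(q,(j,v'),x) \<in> Delta n" by auto
    have "q \<noteq> Fin" using q(2) Delta_F by metis
    then obtain m where m: "m \<in> I" "q = Q m" using q(1) unfolding fl_def by (auto split: if_splits)
    have "(Q m,(j,v'),x) \<in> Delta n" using q m by simp
    then show "x \<in> Q`sg j`I \<union> fl (\<exists>m\<in>I. j \<le> m)" using m unfolding Delta_Q by (auto simp: fl_def)
  next
    assume x: "x \<in> Q`sg j`I \<union> fl (\<exists>m\<in>I. j \<le> m)"
    show "x \<in> {q'. \<exists>q\<in>Q`I \<union> fl b. \<exists>v'. (q,(j,v'),q') \<in> Delta n}"
    proof (cases "x = Fin")
      case True
      then obtain m where m: "m \<in> I" "j \<le> m" using x by (auto simp: fl_def split: if_splits)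
      then have "(Q m, (j, 2*n-m+1), Fin) \<in> Delta n" using assms unfolding Delta_Q by auto
      then show ?thesis using m True by blast
    next
      case False
      then obtain m where m: "m \<in> I" "x = Q (sg j m)" using x by (auto simp: fl_def split: if_splits)
      then have "(Q m, (j, outQ n j m), x) \<in> Delta n" using assms unfolding Delta_Q by auto
      then show ?thesis using m by blast
    qed
  qed
qed

lemma succ_perm: assumes "1 \<le> k" "k \<le> n" "I \<subseteq> {1..n}" "1 \<le> j" "j \<le> n"
  shows "sd_succ (Delta n) (Q`I \<union> fl b) (Q k) j (outQ n j k) = Q`sg j`I \<union> fl (\<exists>m\<in>I. j \<le> m)"
proof -
  have eq: "{q. \<exists>v'. v' < outQ n j k \<and> (Q k, (j, v'), q) \<in> Delta n} = {}"
    using outQ_lt[OF assms(1,2,4,5)] unfolding Delta_Q by auto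
  show ?thesis unfolding sd_succ_def img[OF assms(3-5)] eq by simp
qed

lemma succ_fin: assumes "1 \<le> k" "k \<le> n" "I \<subseteq> {1..n}" "1 \<le> j" "j \<le> n"
  shows "sd_succ (Delta n) (Q`I \<union> fl b) (Q k) j (2*n-k+1) = insert (Q (sg j k)) (Q`sg j`I \<union> fl (\<exists>m\<in>I. j \<le> m))"
proof -
  have eq: "{q. \<exists>v'. v' < 2*n-k+1 \<and> (Q k, (j, v'), q) \<in> Delta n} = {Q (sg j k)}"
    using outQ_lt[OF assms(1,2,4,5)] assms unfolding Delta_Q by auto
  show ?thesis unfolding sd_succ_def img[OF assms(3-5)] eq by simp
qed

lemma succ_S: assumes "1 \<le> i" "i \<le> n" "1 \<le> j" "j \<le> n"
  shows "sd_succ (Delta n) {} S j (i - 1) = Q`{1..i-1}"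
proof -
  have "{q. \<exists>v'. v' < i - 1 \<and> (S, (j, v'), q) \<in> Delta n} = Q`{1..i-1}"
  proof (rule set_eqI)
    fix x show "x \<in> {q. \<exists>v'. v' < i - 1 \<and> (S, (j, v'), q) \<in> Delta n} \<longleftrightarrow> x \<in> Q`{1..i-1}"
      unfolding Delta_S using assms by (auto simp: image_iff)
  qed
  then show ?thesis unfolding sd_succ_def by simp
qed

abbreviation Rch :: "nat \<Rightarrow> (st \<times> st set) set" where
  "Rch n \<equiv> sd_states (Delta n) S"

definition good :: "nat \<Rightarrow> nat \<Rightarrow> nat set \<Rightarrow> bool" where
  "good n k I \<longleftrightarrow> 1 \<le> k \<and> k \<le> n \<and> I \<subseteq> {1..n} \<and> k \<notin> I"

definition shape :: "nat \<Rightarrow> st \<times> st set \<Rightarrow> bool" where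
  "shape n x \<longleftrightarrow> x = (S,{}) \<or> (\<exists>k I b. x = (Q k, Q`I \<union> fl b) \<and> good n k I)
      \<or> (\<exists>Y. x = (Fin, Q`Y) \<and> Y \<subseteq> {1..n})"

lemma sg_img_sub: "I \<subseteq> {1..n} \<Longrightarrow> 1 \<le> j \<Longrightarrow> j \<le> n \<Longrightarrow> sg j ` I \<subseteq> {1..n}"
  using sg_range by fastforce

lemma good_sg: "good n k I \<Longrightarrow> 1 \<le> j \<Longrightarrow> j \<le> n \<Longrightarrow> good n (sg j k) (sg j ` I)"
  unfolding good_def using sg_range sg_img_sub by (auto simp: image_iff)

lemma QI_eq[simp]: "Q`I \<union> fl b = Q`I' \<union> fl b' \<longleftrightarrow> I = I' \<and> b = b'"
proof
  assume h: "Q`I \<union> fl b = Q`I' \<union> fl b'"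
  have "I = I'"
  proof (rule set_eqI)
    fix x show "x \<in> I \<longleftrightarrow> x \<in> I'" using h by (metis UnE UnI1 fl_simps(2) imageI image_iff st.inject)
  qed
  moreover have "b = b'" using h by (metis Un_iff fl_simps(1) image_iff st.distinct(6))
  ultimately show "I = I' \<and> b = b'" by simp
qed simp

lemma Fin_notin_QI[simp]: "Fin \<notin> Q`I" by auto

lemma Rch_shape0: "(p0, N0) \<in> Rch n \<Longrightarrow> shape n (p0, N0)"
proof (induction rule: sd_states.induct)
  case init
  then show ?case unfolding shape_def by simp
next
  case (step p N a v p')
  from step.IH show ?case unfolding shape_def[of n "(p, N)"]
  proof (elim disjE exE conjE)
    assume "(p, N) = (S, {})"
    then have pN: "p = S" "N = {}" by auto
    from step.hyps(2) obtain i where i: "1 \<le> a" "a \<le> n" "1 \<le> i" "i \<le> n" "p' = Q i" "v = i - 1"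
      unfolding pN Delta_S by auto
    have "sd_succ (Delta n) N p a v = Q`{1..i-1} \<union> fl False" unfolding pN i(6) succ_S[OF i(3,4,1,2)]
      by (simp add: fl_def)
    moreover have "good n i {1..i-1}" using i unfolding good_def by auto
    ultimately show "shape n (p', sd_succ (Delta n) N p a v)" unfolding shape_def i(5) by blast
  next
    fix k I b assume pN0: "(p, N) = (Q k, Q ` I \<union> fl b)" and g: "good n k I"
    then have pN: "p = Q k" "N = Q ` I \<union> fl b" by auto
    from g have g': "1 \<le> k" "k \<le> n" "I \<subseteq> {1..n}" unfolding good_def by auto
    from step.hyps(2)[unfolded pN Delta_Q] have a: "1 \<le> a" "a \<le> n"
      and c: "(p' = Q (sg a k) \<and> v = outQ n a k) \<or> (p' = Fin \<and> a \<le> k \<and> v = 2*n-k+1)" by auto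
    from c show "shape n (p', sd_succ (Delta n) N p a v)"
    proof (elim disjE conjE)
      assume h: "p' = Q (sg a k)" "v = outQ n a k"
      show ?thesis unfolding shape_def pN h succ_perm[OF g' a] using good_sg[OF g a] by blast
    next
      assume h: "p' = Fin" "a \<le> k" "v = 2*n-k+1"
      have nf: "\<not> (\<exists>m\<in>I. a \<le> m)" using step.hyps(3) unfolding pN h succ_fin[OF g' a]
        by auto
      have "sd_succ (Delta n) N p a v = Q ` (sg a ` insert k I)"
        unfolding pN h succ_fin[OF g' a] using nf by (auto simp: fl_def)
      moreover have "sg a ` insert k I \<subseteq> {1..n}" using sg_img_sub[of "insert k I" n a] g' a by auto
      ultimately show ?thesis unfolding shape_def h by blast
    qed
  next
    fix Y assume "(p, N) = (Fin, Q ` Y)"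
    then show ?thesis using step.hyps(2) Delta_F by auto
  qed
qed

lemma Rch_shape: "x \<in> Rch n \<Longrightarrow> shape n x"
  using Rch_shape0[of "fst x" "snd x"] by simp

definition E :: "nat \<Rightarrow> nat \<Rightarrow> st \<times> st set \<Rightarrow> st \<times> st set \<Rightarrow> bool" where
  "E n j x y \<longleftrightarrow> (\<exists>m. (x, (j, m), y) \<in> sd_trans (Delta n) S)"

lemma sd_trans_iff: "((p,N),(a,v),y) \<in> sd_trans D i \<longleftrightarrow> (p,N) \<in> sd_states D i \<and>
   (\<exists>p'. (p,(a,v),p') \<in> D \<and> p' \<notin> sd_succ D N p a v \<and> y = (p', sd_succ D N p a v))"
  unfolding sd_trans_def by auto

lemma E_iff: "E n j (p,N) y \<longleftrightarrow> (p,N) \<in> Rch n \<and>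
   (\<exists>v p'. (p,(j,v),p') \<in> Delta n \<and> p' \<notin> sd_succ (Delta n) N p j v \<and> y = (p', sd_succ (Delta n) N p j v))"
  unfolding E_def sd_trans_iff by auto

lemma E_Rch: "E n j x y \<Longrightarrow> x \<in> Rch n \<and> y \<in> Rch n"
  using E_iff[of n j "fst x" "snd x" y] sd_states.step by fastforce

lemma E_notS: "E n j x y \<Longrightarrow> fst y \<noteq> S"
  using E_iff[of n j "fst x" "snd x" y] Delta_notS by fastforce

lemma E_F: "\<not> E n j (Fin, N) y"
  unfolding E_iff using Delta_F by blast

lemma E_S: "E n j (S,{}) y \<longleftrightarrow> 1 \<le> j \<and> j \<le> n \<and> (\<exists>i. 1 \<le> i \<and> i \<le> n \<and> y = (Q i, Q`{1..i-1}))"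
proof
  assume "E n j (S,{}) y"
  then obtain v p' where h: "(S,(j,v),p') \<in> Delta n" "y = (p', sd_succ (Delta n) {} S j v)"
    unfolding E_iff by auto
  then obtain i where i: "1 \<le> j" "j \<le> n" "1 \<le> i" "i \<le> n" "p' = Q i" "v = i - 1" unfolding Delta_S by auto
  show "1 \<le> j \<and> j \<le> n \<and> (\<exists>i. 1 \<le> i \<and> i \<le> n \<and> y = (Q i, Q`{1..i-1}))"
    using i h(2) succ_S[OF i(3,4,1,2)] by auto
next
  assume "1 \<le> j \<and> j \<le> n \<and> (\<exists>i. 1 \<le> i \<and> i \<le> n \<and> y = (Q i, Q`{1..i-1}))"
  then obtain i where i: "1 \<le> j" "j \<le> n" "1 \<le> i" "i \<le> n" "y = (Q i, Q`{1..i-1})" by auto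
  have d: "(S,(j,i-1),Q i) \<in> Delta n" using i unfolding Delta_S by auto
  have "Q i \<notin> sd_succ (Delta n) {} S j (i - 1)" unfolding succ_S[OF i(3,4,1,2)] using i by auto
  then have "E n j (S,{}) (Q i, sd_succ (Delta n) {} S j (i - 1))" unfolding E_iff using d sd_states.init[where D="Delta n" and i=S] by blast
  then show "E n j (S,{}) y" unfolding i(5) succ_S[OF i(3,4,1,2)] .
qed

lemma E_Q: assumes g: "good n k I" and r: "(Q k, Q`I \<union> fl b) \<in> Rch n"
  shows "E n j (Q k, Q`I \<union> fl b) y \<longleftrightarrow> 1 \<le> j \<and> j \<le> n \<and>
     (y = (Q (sg j k), Q`sg j`I \<union> fl (\<exists>m\<in>I. j \<le> m)) \<or>
      (j \<le> k \<and> (\<forall>m\<in>I. m < j) \<and> y = (Fin, Q`(sg j`insert k I))))"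
proof -
  from g have g': "1 \<le> k" "k \<le> n" "I \<subseteq> {1..n}" "k \<notin> I" unfolding good_def by auto
  show ?thesis
  proof
    assume "E n j (Q k, Q`I \<union> fl b) y"
    then obtain v p' where h: "(Q k,(j,v),p') \<in> Delta n" "p' \<notin> sd_succ (Delta n) (Q`I \<union> fl b) (Q k) j v"
      "y = (p', sd_succ (Delta n) (Q`I \<union> fl b) (Q k) j v)"
      unfolding E_iff by auto
    from h(1)[unfolded Delta_Q] have a: "1 \<le> j" "j \<le> n"
      and c: "(p' = Q (sg j k) \<and> v = outQ n j k) \<or> (p' = Fin \<and> j \<le> k \<and> v = 2*n-k+1)" by auto
    from c show "1 \<le> j \<and> j \<le> n \<and>
     (y = (Q (sg j k), Q`sg j`I \<union> fl (\<exists>m\<in>I. j \<le> m)) \<or>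
      (j \<le> k \<and> (\<forall>m\<in>I. m < j) \<and> y = (Fin, Q`(sg j`insert k I))))"
    proof (elim disjE conjE)
      assume hh: "p' = Q (sg j k)" "v = outQ n j k"
      show ?thesis using a h(3) unfolding hh succ_perm[OF g'(1-3) a] by simp
    next
      assume hh: "p' = Fin" "j \<le> k" "v = 2*n-k+1"
      have nf: "\<not> (\<exists>m\<in>I. j \<le> m)" using h(2) unfolding hh succ_fin[OF g'(1-3) a] by auto
      have "sd_succ (Delta n) (Q`I \<union> fl b) (Q k) j v = Q ` (sg j ` insert k I)"
        unfolding hh succ_fin[OF g'(1-3) a] using nf by (auto simp: fl_def)
      then have y: "y = (Fin, Q`(sg j ` insert k I))" using h(3) hh(1) by simp
      have "\<forall>m\<in>I. m < j" using nf by (simp add: not_le)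
      then show ?thesis using a hh(2) y by blast
    qed
  next
    assume "1 \<le> j \<and> j \<le> n \<and>
     (y = (Q (sg j k), Q`sg j`I \<union> fl (\<exists>m\<in>I. j \<le> m)) \<or>
      (j \<le> k \<and> (\<forall>m\<in>I. m < j) \<and> y = (Fin, Q`(sg j`insert k I))))"
    then have a: "1 \<le> j" "j \<le> n" and c: "(y = (Q (sg j k), Q`sg j`I \<union> fl (\<exists>m\<in>I. j \<le> m)) \<or>
      (j \<le> k \<and> (\<forall>m\<in>I. m < j) \<and> y = (Fin, Q`(sg j`insert k I))))" by auto
    from c show "E n j (Q k, Q`I \<union> fl b) y"
    proof (elim disjE conjE)
      assume y: "y = (Q (sg j k), Q`sg j`I \<union> fl (\<exists>m\<in>I. j \<le> m))"
      have d: "(Q k, (j, outQ n j k), Q (sg j k)) \<in> Delta n" unfolding Delta_Q using g' a by auto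
      have "Q (sg j k) \<notin> Q`sg j`I \<union> fl (\<exists>m\<in>I. j \<le> m)" using g'(4) by auto
      then have "Q (sg j k) \<notin> sd_succ (Delta n) (Q`I \<union> fl b) (Q k) j (outQ n j k)"
        unfolding succ_perm[OF g'(1-3) a] .
      then have "E n j (Q k, Q`I \<union> fl b) (Q (sg j k), sd_succ (Delta n) (Q`I \<union> fl b) (Q k) j (outQ n j k))"
        unfolding E_iff using r d by blast
      then show ?thesis unfolding y succ_perm[OF g'(1-3) a] .
    next
      assume y: "j \<le> k" "\<forall>m\<in>I. m < j" "y = (Fin, Q`(sg j`insert k I))"
      have d: "(Q k, (j, 2*n-k+1), Fin) \<in> Delta n" unfolding Delta_Q using g' a y by auto
      have nf: "\<not> (\<exists>m\<in>I. j \<le> m)" using y(2) by auto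
      have e: "sd_succ (Delta n) (Q`I \<union> fl b) (Q k) j (2*n-k+1) = Q ` (sg j ` insert k I)"
        unfolding succ_fin[OF g'(1-3) a] using nf by (auto simp: fl_def)
      have "Fin \<notin> sd_succ (Delta n) (Q`I \<union> fl b) (Q k) j (2*n-k+1)" unfolding e by simp
      then have "E n j (Q k, Q`I \<union> fl b) (Fin, sd_succ (Delta n) (Q`I \<union> fl b) (Q k) j (2*n-k+1))"
        unfolding E_iff using r d by blast
      then show ?thesis unfolding y(3) e .
    qed
  qed
qed

lemma E_Qp: assumes g: "good n k I" and r: "(Q k, Q`I \<union> fl b) \<in> Rch n" and j: "1 \<le> j" "j \<le> n"
  shows "E n j (Q k, Q`I \<union> fl b) (Q (sg j k), Q`sg j`I \<union> fl (\<exists>m\<in>I. j \<le> m))"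
  using E_Q[OF g r] j by blast

lemma E_Qf: assumes g: "good n k I" and r: "(Q k, Q`I \<union> fl b) \<in> Rch n" and j: "1 \<le> j" "j \<le> n"
   "j \<le> k" "\<forall>m\<in>I. m < j"
  shows "E n j (Q k, Q`I \<union> fl b) (Fin, Q`(sg j`insert k I))"
  using E_Q[OF g r] j by blast

definition R :: "nat \<Rightarrow> nat \<Rightarrow> nat set \<Rightarrow> bool" where
  "R n k I \<longleftrightarrow> good n k I \<and> (\<exists>b. (Q k, Q`I \<union> fl b) \<in> Rch n)"

lemma R_sg: assumes "R n k I" "1 \<le> j" "j \<le> n" shows "R n (sg j k) (sg j ` I)"
proof -
  from assms(1) obtain b where g: "good n k I" and r: "(Q k, Q`I \<union> fl b) \<in> Rch n" unfolding R_def by auto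
  have "E n j (Q k, Q`I \<union> fl b) (Q (sg j k), Q`sg j`I \<union> fl (\<exists>m\<in>I. j \<le> m))"
    by (rule E_Qp[OF g r assms(2,3)])
  then have "(Q (sg j k), Q`sg j`I \<union> fl (\<exists>m\<in>I. j \<le> m)) \<in> Rch n" using E_Rch by blast
  then show ?thesis unfolding R_def using good_sg[OF g assms(2,3)] by blast
qed

lemma tp_cases: assumes "a \<noteq> b"
  shows "(a = 1 \<and> Transposition.transpose a b = sg b) \<or> (b = 1 \<and> Transposition.transpose a b = sg a)
    \<or> (Transposition.transpose a b = sg a \<circ> sg b \<circ> sg a)"
  using assms by (auto simp: fun_eq_iff transpose_def sg_def)

lemma sg_closure_tp:
  assumes cl: "\<And>j X. 1 \<le> j \<Longrightarrow> j \<le> n \<Longrightarrow> P X \<Longrightarrow> P (sg j ` X)"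
    and ab: "1 \<le> a" "a \<le> n" "1 \<le> b" "b \<le> n" and p: "P X"
  shows "P (Transposition.transpose a b ` X)"
proof (cases "a = b")
  case True then show ?thesis using p by simp
next
  case False
  from tp_cases[OF False] show ?thesis
  proof (elim disjE conjE)
    assume "Transposition.transpose a b = sg b" then show ?thesis using cl ab p by simp
  next
    assume "Transposition.transpose a b = sg a" then show ?thesis using cl ab p by simp
  next
    assume h: "Transposition.transpose a b = sg a \<circ> sg b \<circ> sg a"
    have "P (sg a ` (sg b ` (sg a ` X)))" using cl ab p by blast
    then show ?thesis unfolding h by (simp add: image_comp)
  qed
qed

lemma exch:
  assumes U: "finite U" "X0 \<subseteq> U" and P0: "P X0"
    and cl: "\<And>a b X. a \<in> U \<Longrightarrow> b \<in> U \<Longrightarrow> X \<subseteq> U \<Longrightarrow> P X \<Longrightarrow> P (Transposition.transpose a b ` X)"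
  shows "X \<subseteq> U \<Longrightarrow> card X = card X0 \<Longrightarrow> P X"
proof (induction "card (X - X0)" arbitrary: X)
  case 0
  have fX: "finite X" using U "0.prems"(1) finite_subset by blast
  then have "X \<subseteq> X0" using "0.hyps" by simp
  moreover have "finite X0" using U finite_subset by blast
  ultimately have "X = X0" using "0.prems"(2) card_subset_eq by blast
  then show ?case using P0 by simp
next
  case (Suc d)
  have fX: "finite X" using U Suc.prems(1) finite_subset by blast
  have fX0: "finite X0" using U finite_subset by blast
  obtain x where x: "x \<in> X" "x \<notin> X0" using Suc.hyps(2)
    by (metis Diff_iff card.empty ex_in_conv nat.distinct(1))
  have c1: "card (X - X0) = card X - card (X \<inter> X0)" using fX by (simp add: card_Diff_subset_Int inf_commute Diff_Int2)
  have c2: "card (X0 - X) = card X0 - card (X \<inter> X0)" using fX0 by (simp add: card_Diff_subset_Int Diff_Int2) (simp add: Int_commute)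
  have "card (X0 - X) = Suc d" using c1 c2 Suc.hyps(2) Suc.prems(2) by simp
  then obtain y where y: "y \<in> X0" "y \<notin> X"
    by (metis Diff_iff card.empty ex_in_conv nat.distinct(1))
  define X' where "X' = insert y (X - {x})"
  have X'U: "X' \<subseteq> U" unfolding X'_def using Suc.prems(1) y U by auto
  have cX': "card X' = card X0" unfolding X'_def using fX x y Suc.prems(2)
    by (simp add: card_Diff_singleton) (metis Suc.prems(2) card_0_eq empty_iff fX Suc_pred neq0_conv x(1))
  have "X' - X0 = (X - X0) - {x}" unfolding X'_def using y x by auto
  then have "card (X' - X0) = d" using Suc.hyps(2) x fX by (simp add: card_Diff_singleton)
  then have PX': "P X'" using Suc.hyps(1) X'U cX' by blast
  have "Transposition.transpose x y ` X' = X"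
  proof -
    have "Transposition.transpose x y ` X' = insert x (Transposition.transpose x y ` (X - {x}))"
      unfolding X'_def by simp
    also have "Transposition.transpose x y ` (X - {x}) = X - {x}"
      using y(2) by (force simp: transpose_def image_iff)
    finally show ?thesis using x(1) by auto
  qed
  then show ?case using cl[OF _ _ X'U PX'] x y Suc.prems(1) U by blast
qed

lemma R_tp: assumes "R n k I" "1 \<le> a" "a \<le> n" "1 \<le> b" "b \<le> n"
  shows "R n (Transposition.transpose a b k) (Transposition.transpose a b ` I)"
proof (cases "a = b")
  case True then show ?thesis using assms by simp
next
  case False
  from tp_cases[OF False] show ?thesis
  proof (elim disjE conjE)
    assume "Transposition.transpose a b = sg b" then show ?thesis using R_sg assms by simp
  next
    assume "Transposition.transpose a b = sg a" then show ?thesis using R_sg assms by simp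
  next
    assume h: "Transposition.transpose a b = sg a \<circ> sg b \<circ> sg a"
    have "R n (sg a (sg b (sg a k))) (sg a ` (sg b ` (sg a ` I)))" using R_sg assms by blast
    then show ?thesis unfolding h by (simp add: image_comp)
  qed
qed

lemma R_all: assumes "good n k I" shows "R n k I"
proof -
  have I: "I \<subseteq> {1..n}" "k \<notin> I" "1 \<le> k" "k \<le> n" using assms unfolding good_def by auto
  define c where "c = card I"
  have "I \<subseteq> {1..n} - {k}" using I by auto
  then have "c \<le> card ({1..n} - {k})" unfolding c_def by (simp add: card_mono)
  then have cn: "c < n" using I by simp
  have "E n 1 (S,{}) (Q (c+1), Q`{1..(c+1)-1})" unfolding E_S using cn by auto
  then have "(Q (c+1), Q`{1..c} \<union> fl False) \<in> Rch n" using E_Rch by (simp add: fl_def)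
  moreover have "good n (c+1) {1..c}" unfolding good_def using cn by auto
  ultimately have base: "\<exists>k. R n k {1..c}" unfolding R_def by blast
  have "\<exists>k. R n k I"
  proof (rule exch[of "{1..n}" "{1..c}" "\<lambda>X. \<exists>k. R n k X"])
    show "\<exists>k. R n k {1..c}" by (rule base)
    show "{1..c} \<subseteq> {1..n}" using cn by auto
    show "I \<subseteq> {1..n}" using I by simp
    show "card I = card {1..c}" unfolding c_def by simp
    fix a b X assume "a \<in> {1..n}" "b \<in> {1..n}" "\<exists>k. R n k X"
    then show "\<exists>k. R n k (Transposition.transpose a b ` X)" using R_tp by fastforce
  qed simp
  then obtain k' where k': "R n k' I" by blast
  show ?thesis
  proof (cases "k' = k")
    case True then show ?thesis using k' by simp
  next
    case False
    have g': "good n k' I" using k' unfolding R_def by simp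
    have "R n (Transposition.transpose k' k k') (Transposition.transpose k' k ` I)"
    proof -
      have "1 \<le> k'" "k' \<le> n" using g' unfolding good_def by auto
      then show ?thesis by (rule R_tp[OF k' _ _ I(3,4)])
    qed
    moreover have "Transposition.transpose k' k ` I = I"
    proof -
      have "\<forall>x\<in>I. Transposition.transpose k' k x = x" using I(2) g' unfolding good_def
        by (auto simp: transpose_def)
      then show ?thesis by simp
    qed
    ultimately show ?thesis by simp
  qed
qed

lemma sg1: "sg 1 k = k" "sg (Suc 0) k = k" unfolding sg_def by simp_all
lemma sgjj[simp]: "sg j j = 1" unfolding sg_def by simp
lemma sgj1[simp]: "sg j 1 = j" "sg j (Suc 0) = j" unfolding sg_def by simp_all

lemma FT: assumes "good n k I" "I \<noteq> {}" shows "(Q k, insert Fin (Q`I)) \<in> Rch n"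
proof -
  obtain b where r: "(Q k, Q`I \<union> fl b) \<in> Rch n" using R_all[OF assms(1)] unfolding R_def by blast
  have k: "1 \<le> n" using assms(1) unfolding good_def by auto
  have I: "\<exists>m\<in>I. 1 \<le> m" using assms unfolding good_def by auto
  have "E n 1 (Q k, Q`I \<union> fl b) (Q (sg 1 k), Q`sg 1`I \<union> fl (\<exists>m\<in>I. 1 \<le> m))"
    by (rule E_Qp[OF assms(1) r order.refl k])
  then have "(Q (sg 1 k), Q`sg 1`I \<union> fl (\<exists>m\<in>I. 1 \<le> m)) \<in> Rch n" using E_Rch by blast
  moreover have "Q`sg 1`I \<union> fl (\<exists>m\<in>I. 1 \<le> m) = insert Fin (Q`I)" using I by (auto simp: fl_def sg1)
  ultimately show ?thesis by (simp add: sg1)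
qed

lemma FF: assumes "good n k I" "1 \<notin> I" shows "(Q k, Q`I) \<in> Rch n"
proof -
  have k: "1 \<le> n" using assms(1) unfolding good_def by auto
  have g: "good n (sg n k) (sg n ` I)" using good_sg[OF assms(1) k order.refl] .
  obtain b where r: "(Q (sg n k), Q`(sg n ` I) \<union> fl b) \<in> Rch n" using R_all[OF g] unfolding R_def by blast
  have "E n n (Q (sg n k), Q`(sg n ` I) \<union> fl b) (Q (sg n (sg n k)), Q`sg n`(sg n ` I) \<union> fl (\<exists>m\<in>sg n ` I. n \<le> m))"
    by (rule E_Qp[OF g r k order.refl])
  then have e: "(Q (sg n (sg n k)), Q`sg n`(sg n ` I) \<union> fl (\<exists>m\<in>sg n ` I. n \<le> m)) \<in> Rch n"
    using E_Rch by blast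
  have nf: "\<not> (\<exists>m\<in>sg n ` I. n \<le> m)"
  proof
    assume "\<exists>m\<in>sg n ` I. n \<le> m"
    then obtain i where i: "i \<in> I" "n \<le> sg n i" by auto
    have "sg n i \<le> n" using sg_range[of n n i] i(1) assms(1) k unfolding good_def by auto
    then have "sg n i = n" using i by simp
    then have "i = sg n n" by (metis sg_sg)
    then show False using i assms(2) by simp
  qed
  have "Q`sg n`(sg n ` I) \<union> fl (\<exists>m\<in>sg n ` I. n \<le> m) = Q`I"
    unfolding image_image sg_sg using nf by (simp add: fl_def)
  then show ?thesis using e by simp
qed

lemma fin_from: assumes g: "good n k I" and j: "1 \<le> j" "j \<le> n" "j \<le> k" "\<forall>m\<in>I. m < j"
  shows "(Fin, Q`(sg j`insert k I)) \<in> Rch n"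
proof -
  obtain b where r: "(Q k, Q`I \<union> fl b) \<in> Rch n" using R_all[OF g] unfolding R_def by blast
  show ?thesis using E_Qf[OF g r j] E_Rch by blast
qed

lemma FinR: assumes Y: "Y \<subseteq> {1..n}" "Y \<noteq> {}" shows "(Fin, Q`Y) \<in> Rch n"
proof -
  have fY: "finite Y" using Y(1) finite_subset by blast
  have n1: "1 \<le> n" using Y by auto
  show ?thesis
  proof (cases "1 \<in> Y")
    case True
    define I where "I = sg n ` Y - {n}"
    have g: "good n n I" unfolding good_def I_def using sg_img_sub[OF Y(1) n1 order.refl] n1 by auto
    have lt: "\<forall>m\<in>I. m < n"
    proof
      fix m assume "m \<in> I"
      then have "m \<in> sg n ` Y" "m \<noteq> n" unfolding I_def by auto
      then have "m \<le> n" "m \<noteq> n" using sg_img_sub[OF Y(1) n1 order.refl] by auto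
      then show "m < n" by simp
    qed
    have "n \<in> sg n ` Y" using True by (metis image_eqI sgj1)
    then have "insert n I = sg n ` Y" unfolding I_def by auto
    then have "sg n ` insert n I = Y" by (simp add: image_image)
    then show ?thesis using fin_from[OF g n1 order.refl order.refl lt] by simp
  next
    case False
    define M where "M = Max Y"
    have M: "M \<in> Y" "\<forall>y\<in>Y. y \<le> M" unfolding M_def using fY Y(2) by auto
    show ?thesis
    proof (cases "Y = {M}")
      case True
      have g: "good n M {}" unfolding good_def using M Y(1) by auto
      have M1: "1 \<le> M" using g unfolding good_def by simp
      have "(Fin, Q`(sg 1`insert M {})) \<in> Rch n" by (rule fin_from[OF g order.refl n1 M1]) simp
      then show ?thesis using True by (simp add: sg1)
    next
      case False
      have ne: "Y - {M} \<noteq> {}" using False M by auto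
      define J where "J = Max (Y - {M})"
      have fYM: "finite (Y - {M})" using fY by simp
      have J1: "J \<in> Y - {M}" unfolding J_def using Max_in[OF fYM ne] .
      have J3: "\<forall>y\<in>Y - {M}. y \<le> J" unfolding J_def using Max_ge[OF fYM] by blast
      have J: "J \<in> Y" "J \<noteq> M" "\<forall>y\<in>Y - {M}. y \<le> J" using J1 J3 by auto
      have JMle: "J \<le> M" using M(2) J(1) by blast
      have J1n: "1 \<le> J" "J \<noteq> 1" using J(1) Y(1) `1 \<notin> Y` by auto
      then have J2: "2 \<le> J" by simp
      have M1: "M \<noteq> 1" using M(1) `1 \<notin> Y` by auto
      define I where "I = insert 1 (Y - {M, J})"
      have g: "good n M I" unfolding good_def I_def using M Y(1) M1 n1 by auto
      have lt: "\<forall>m\<in>I. m < J"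
      proof
        fix m assume "m \<in> I"
        then have "m = 1 \<or> (m \<in> Y - {M} \<and> m \<noteq> J)" unfolding I_def by auto
        then show "m < J"
        proof (elim disjE conjE)
          assume "m = 1" then show ?thesis using J2 by simp
        next
          assume a: "m \<in> Y - {M}" "m \<noteq> J"
          have "m \<le> J" using J(3) a(1) by blast
          then show ?thesis using a(2) by simp
        qed
      qed
      have jn: "J \<le> n" using J(1) Y(1) by auto
      have "sg J ` insert M I = Y"
      proof -
        have e1: "sg J ` insert M I = insert (sg J M) (insert (sg J 1) (sg J ` (Y - {M, J})))"
          unfolding I_def by (simp only: image_insert)
        have h: "\<And>y. y \<in> Y - {M, J} \<Longrightarrow> sg J y = y" using `1 \<notin> Y` unfolding sg_def by auto
        have e2: "sg J ` (Y - {M, J}) = Y - {M, J}"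
        proof (rule set_eqI, rule iffI)
          fix y assume "y \<in> sg J ` (Y - {M, J})"
          then obtain x where x: "x \<in> Y - {M, J}" "y = sg J x" by blast
          then show "y \<in> Y - {M, J}" using h[OF x(1)] by simp
        next
          fix y assume y: "y \<in> Y - {M, J}"
          then have "sg J y \<in> sg J ` (Y - {M, J})" by (rule imageI)
          then show "y \<in> sg J ` (Y - {M, J})" using h[OF y] by simp
        qed
        have e3: "sg J M = M" using M1 J(2) unfolding sg_def by auto
        have e4: "insert M (insert J (Y - {M, J})) = Y" using M(1) J(1) by blast
        show ?thesis unfolding e1 e2 e3 sgj1 e4 ..
      qed
      moreover have "(Fin, Q`(sg J`insert M I)) \<in> Rch n" by (rule fin_from[OF g J1n(1) jn JMle lt])
      ultimately show ?thesis by simp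
    qed
  qed
qed

lemma S_Rch: "(S, {}) \<in> Rch n" by (rule sd_states.init)

abbreviation SD :: "nat \<Rightarrow> (st \<times> st set, nat \<times> nat) aut" where
  "SD n \<equiv> spec_det (Tn n) S"

lemma SD_states: "states (SD n) = Rch n" by (simp add: spec_det_def Tn_def)
lemma SD_inits: "inits (SD n) = {(S,{})}" by (simp add: spec_det_def Tn_def)
lemma SD_trans: "trans (SD n) = sd_trans (Delta n) S" by (simp add: spec_det_def Tn_def)
lemma SD_finals: "finals (SD n) = {x. x \<in> Rch n \<and> fst x = Fin \<and> Fin \<notin> snd x}"
  by (auto simp: spec_det_def Tn_def)

lemma edge_iff: "(x, y) \<in> edge_rel (SD n) \<longleftrightarrow> (\<exists>j. E n j x y)"
  by (simp add: edge_rel_def SD_trans E_def split_paired_Ex)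

lemma sd_trans_Rch: "(x, l, y) \<in> sd_trans (Delta n) S \<Longrightarrow> x \<in> Rch n \<and> y \<in> Rch n"
proof -
  assume "(x, l, y) \<in> sd_trans (Delta n) S"
  then obtain p N a v p' where h: "(x,l,y) = ((p,N),(a,v),(p', sd_succ (Delta n) N p a v))" "(p,N) \<in> Rch n"
    "(p,(a,v),p') \<in> Delta n" "p' \<notin> sd_succ (Delta n) N p a v" unfolding sd_trans_def by blast
  then show ?thesis using sd_states.step[OF h(2) h(3) h(4)] by simp
qed

lemma acc0: "(p0, N0) \<in> Rch n \<Longrightarrow> ((S,{}), (p0, N0)) \<in> (edge_rel (SD n))\<^sup>*"
proof (induction rule: sd_states.induct)
  case init then show ?case by simp
next
  case (step p N a v p')
  have "E n a (p, N) (p', sd_succ (Delta n) N p a v)" unfolding E_iff using step.hyps by blast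
  then have "((p, N), (p', sd_succ (Delta n) N p a v)) \<in> edge_rel (SD n)" unfolding edge_iff by blast
  then show ?case using step.IH by (rule rtrancl_into_rtrancl[rotated])
qed

lemma acc_all: "x \<in> Rch n \<Longrightarrow> ((S,{}), x) \<in> (edge_rel (SD n))\<^sup>*"
  using acc0[of "fst x" "snd x" n] by simp

definition co :: "nat \<Rightarrow> st \<times> st set \<Rightarrow> bool" where
  "co n x \<longleftrightarrow> (\<exists>y\<in>finals (SD n). (x, y) \<in> (edge_rel (SD n))\<^sup>*)"

lemma co_step: "E n j x y \<Longrightarrow> co n y \<Longrightarrow> co n x"
proof -
  assume e: "E n j x y" and c: "co n y"
  from c obtain z where z: "z \<in> finals (SD n)" "(y, z) \<in> (edge_rel (SD n))\<^sup>*" unfolding co_def by blast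
  have "(x, y) \<in> edge_rel (SD n)" unfolding edge_iff using e by blast
  then have "(x, z) \<in> (edge_rel (SD n))\<^sup>*" using z(2) by (rule converse_rtrancl_into_rtrancl)
  then show "co n x" unfolding co_def using z(1) by blast
qed

lemma co_fin: "(Fin, N) \<in> Rch n \<Longrightarrow> Fin \<notin> N \<Longrightarrow> co n (Fin, N)"
proof -
  assume "(Fin, N) \<in> Rch n" "Fin \<notin> N"
  then have "(Fin, N) \<in> finals (SD n)" unfolding SD_finals by simp
  then show ?thesis unfolding co_def by blast
qed

lemma co_n: assumes g: "good n n I" and r: "(Q n, Q`I \<union> fl b) \<in> Rch n" shows "co n (Q n, Q`I \<union> fl b)"
proof -
  have n1: "1 \<le> n" using g unfolding good_def by simp
  have lt: "\<forall>m\<in>I. m < n"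
  proof
    fix m assume "m \<in> I" then have "m \<le> n" "m \<noteq> n" using g unfolding good_def by auto
    then show "m < n" by simp
  qed
  have e: "E n n (Q n, Q`I \<union> fl b) (Fin, Q`(sg n`insert n I))" by (rule E_Qf[OF g r n1 order.refl order.refl lt])
  then have "(Fin, Q`(sg n`insert n I)) \<in> Rch n" using E_Rch by blast
  then have "co n (Fin, Q`(sg n`insert n I))" by (rule co_fin) simp
  then show ?thesis using co_step[OF e] by blast
qed

lemma co_1: assumes g: "good n 1 I" and r: "(Q 1, Q`I \<union> fl b) \<in> Rch n" shows "co n (Q 1, Q`I \<union> fl b)"
proof -
  have n1: "1 \<le> n" using g unfolding good_def by simp
  have e: "E n n (Q 1, Q`I \<union> fl b) (Q (sg n 1), Q`sg n`I \<union> fl (\<exists>m\<in>I. n \<le> m))"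
    by (rule E_Qp[OF g r n1 order.refl])
  have g': "good n n (sg n ` I)" using good_sg[OF g n1 order.refl] by simp
  have "(Q (sg n 1), Q`sg n`I \<union> fl (\<exists>m\<in>I. n \<le> m)) \<in> Rch n" using e E_Rch by blast
  then have "co n (Q (sg n 1), Q`sg n`I \<union> fl (\<exists>m\<in>I. n \<le> m))" using co_n[OF g'] by simp
  then show ?thesis using co_step[OF e] by blast
qed

lemma co_Q: assumes g: "good n k I" and r: "(Q k, Q`I \<union> fl b) \<in> Rch n" shows "co n (Q k, Q`I \<union> fl b)"
proof (cases "k = 1")
  case True then show ?thesis using co_1 g r by blast
next
  case False
  have k: "1 \<le> k" "k \<le> n" using g unfolding good_def by auto
  have e: "E n k (Q k, Q`I \<union> fl b) (Q (sg k k), Q`sg k`I \<union> fl (\<exists>m\<in>I. k \<le> m))"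
    by (rule E_Qp[OF g r k])
  have g': "good n 1 (sg k ` I)" using good_sg[OF g k] by simp
  have "(Q (sg k k), Q`sg k`I \<union> fl (\<exists>m\<in>I. k \<le> m)) \<in> Rch n" using e E_Rch by blast
  then have "co n (Q (sg k k), Q`sg k`I \<union> fl (\<exists>m\<in>I. k \<le> m))" using co_1[OF g'] by simp
  then show ?thesis using co_step[OF e] by blast
qed

lemma co_all: assumes n1: "1 \<le> n" and x: "x \<in> Rch n" shows "co n x"
proof -
  from Rch_shape[OF x] show ?thesis unfolding shape_def
  proof (elim disjE exE conjE)
    assume xS: "x = (S, {})"
    have e: "E n 1 (S,{}) (Q 1, Q`{1..1-1})" unfolding E_S using n1 by auto
    have g: "good n 1 {}" using n1 unfolding good_def by simp
    have "(Q 1, Q`{} \<union> fl False) \<in> Rch n" using e E_Rch by (simp add: fl_def)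
    then have "co n (Q 1, Q`{} \<union> fl False)" by (rule co_1[OF g])
    then show ?thesis unfolding xS using co_step[OF e] by (simp add: fl_def)
  next
    fix k I b assume "x = (Q k, Q ` I \<union> fl b)" "good n k I"
    then show ?thesis using co_Q x by blast
  next
    fix Y assume "x = (Fin, Q ` Y)"
    then show ?thesis using co_fin x by simp
  qed
qed

lemma K_eq: assumes "1 \<le> n" shows "accessible (SD n) \<inter> coaccessible (SD n) = Rch n"
proof -
  have "accessible (SD n) = Rch n" unfolding accessible_def SD_states SD_inits using acc_all by blast
  moreover have "coaccessible (SD n) = Rch n" unfolding coaccessible_def SD_states
    using co_all[OF assms] unfolding co_def by blast
  ultimately show ?thesis by simp
qed

lemma Tn'_states: "1 \<le> n \<Longrightarrow> states (Tn' n) = Rch n"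
  unfolding Tn'_def trim_def Let_def K_eq by simp

lemma Tn'_inits: "1 \<le> n \<Longrightarrow> inits (Tn' n) = {(S,{})}"
  unfolding Tn'_def trim_def Let_def K_eq by (simp add: SD_inits S_Rch)

lemma Tn'_finals: "1 \<le> n \<Longrightarrow> finals (Tn' n) = {x. x \<in> Rch n \<and> fst x = Fin \<and> Fin \<notin> snd x}"
  unfolding Tn'_def trim_def Let_def K_eq by (auto simp: SD_finals)

lemma Tn'_trans: "1 \<le> n \<Longrightarrow> trans (Tn' n) = sd_trans (Delta n) S"
proof -
  assume n: "1 \<le> n"
  have "{(p, l, q). (p, l, q) \<in> sd_trans (Delta n) S \<and> p \<in> Rch n \<and> q \<in> Rch n} = sd_trans (Delta n) S"
    using sd_trans_Rch by blast
  then show ?thesis unfolding Tn'_def trim_def Let_def K_eq[OF n] SD_trans by simp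
qed

definition Sts :: "nat \<Rightarrow> st set" where "Sts n = {S, Fin} \<union> Q`{1..n}"

lemma finite_Rch: "finite (Rch n)"
proof -
  have "Rch n \<subseteq> Sts n \<times> Pow (Sts n)"
  proof
    fix x assume "x \<in> Rch n"
    from Rch_shape[OF this] show "x \<in> Sts n \<times> Pow (Sts n)" unfolding shape_def
    proof (elim disjE exE conjE)
      assume "x = (S, {})" then show ?thesis by (simp add: Sts_def)
    next
      fix k I b assume h: "x = (Q k, Q ` I \<union> fl b)" "good n k I"
      then have "I \<subseteq> {1..n}" "1 \<le> k" "k \<le> n" unfolding good_def by auto
      then show ?thesis unfolding h(1) Sts_def fl_def by auto
    next
      fix Y assume h: "x = (Fin, Q ` Y)" "Y \<subseteq> {1..n}"
      then show ?thesis unfolding h(1) Sts_def by auto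
    qed
  qed
  moreover have "finite (Sts n \<times> Pow (Sts n))" unfolding Sts_def by simp
  ultimately show ?thesis by (rule finite_subset)
qed

lemma good_of_Rch: "(Q k, Q`I \<union> fl b) \<in> Rch n \<Longrightarrow> good n k I"
proof -
  assume r: "(Q k, Q`I \<union> fl b) \<in> Rch n"
  from Rch_shape[OF r] show ?thesis unfolding shape_def
  proof (elim disjE exE conjE)
    fix k' I' b' assume h: "(Q k, Q ` I \<union> fl b) = (Q k', Q ` I' \<union> fl b')" "good n k' I'"
    then have "k = k'" "I = I'" by auto
    then show ?thesis using h(2) by simp
  qed auto
qed

lemma Q_Rch_form: "(Q k, N) \<in> Rch n \<Longrightarrow> \<exists>I b. N = Q`I \<union> fl b \<and> good n k I"
proof -
  assume r: "(Q k, N) \<in> Rch n"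
  from Rch_shape[OF r] show ?thesis unfolding shape_def by auto
qed

lemma part1_card: assumes n1: "1 \<le> n" shows "n * 2^(n-1) + 2^n \<le> card (Rch n)"
proof -
  define Sig where "Sig = Sigma {1..n} (\<lambda>k. Pow ({1..n} - {k}))"
  define g where "g = (\<lambda>(k::nat, I::nat set). (Q k, if I = {} then {} else insert Fin (Q`I)))"
  define h where "h = (\<lambda>Y::nat set. if Y = {} then (S, {}) else (Fin, Q`Y))"
  have cSig: "card Sig = n * 2^(n-1)"
  proof -
    have "card Sig = (\<Sum>k\<in>{1..n}. card (Pow ({1..n} - {k})))" unfolding Sig_def
      by (rule card_SigmaI) auto
    also have "\<dots> = (\<Sum>k\<in>{1..n}. 2^(n-1))"
    proof (rule sum.cong)
      fix k assume "k \<in> {1..n}"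
      then have "card ({1..n} - {k}) = n - 1" by simp
      then show "card (Pow ({1..n} - {k})) = 2^(n-1)" by (simp add: card_Pow)
    qed simp
    finally show ?thesis by simp
  qed
  have ig: "inj_on g Sig"
  proof (rule inj_onI)
    fix x y assume x: "x \<in> Sig" and y: "y \<in> Sig" and e: "g x = g y"
    obtain k I where xk: "x = (k, I)" by (cases x)
    obtain k' I' where yk: "y = (k', I')" by (cases y)
    have kk: "k = k'" using e unfolding xk yk g_def by simp
    have II: "(if I = {} then {} else insert Fin (Q`I)) = (if I' = {} then {} else insert Fin (Q`I'))"
      using e unfolding xk yk g_def by simp
    have "I = I'"
    proof (cases "I = {}")
      case True then show ?thesis using II by (auto split: if_splits)
    next
      case False
      then have "I' \<noteq> {}" using II by (auto split: if_splits)
      then have "insert Fin (Q`I) = insert Fin (Q`I')" using II False by simp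
      then have "Q`I = Q`I'" by (metis Fin_notin_QI insert_ident)
      then show ?thesis by (simp add: inj_image_eq_iff inj_def)
    qed
    then show "x = y" using kk xk yk by simp
  qed
  have ih: "inj_on h (Pow {1..n})"
  proof (rule inj_onI)
    fix Y Y' assume e: "h Y = h Y'"
    show "Y = Y'"
    proof (cases "Y = {}")
      case True then show ?thesis using e unfolding h_def by (auto split: if_splits)
    next
      case False
      then have "Y' \<noteq> {}" using e unfolding h_def by (auto split: if_splits)
      then have "Q`Y = Q`Y'" using e False unfolding h_def by simp
      then show ?thesis by (simp add: inj_image_eq_iff inj_def)
    qed
  qed
  have disj: "g ` Sig \<inter> h ` Pow {1..n} = {}"
    unfolding g_def h_def by auto
  have sub: "g ` Sig \<union> h ` Pow {1..n} \<subseteq> Rch n"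
  proof
    fix x assume "x \<in> g ` Sig \<union> h ` Pow {1..n}"
    then show "x \<in> Rch n"
    proof
      assume "x \<in> g ` Sig"
      then obtain k I where kI: "k \<in> {1..n}" "I \<subseteq> {1..n} - {k}" "x = g (k, I)" unfolding Sig_def by auto
      have gd: "good n k I" unfolding good_def using kI by auto
      show ?thesis
      proof (cases "I = {}")
        case True
        have "(Q k, Q`I) \<in> Rch n" by (rule FF[OF gd]) (simp add: True)
        then show ?thesis using kI(3) True unfolding g_def by simp
      next
        case False
        have "(Q k, insert Fin (Q`I)) \<in> Rch n" by (rule FT[OF gd False])
        then show ?thesis using kI(3) False unfolding g_def by simp
      qed
    next
      assume "x \<in> h ` Pow {1..n}"
      then obtain Y where Y: "Y \<subseteq> {1..n}" "x = h Y" by auto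
      show ?thesis
      proof (cases "Y = {}")
        case True then show ?thesis using Y S_Rch unfolding h_def by simp
      next
        case False then show ?thesis using Y FinR[OF Y(1) False] unfolding h_def by simp
      qed
    qed
  qed
  have fS: "finite Sig" unfolding Sig_def by simp
  have "card (g ` Sig \<union> h ` Pow {1..n}) = card (g ` Sig) + card (h ` Pow {1..n})"
    by (rule card_Un_disjoint) (use fS disj in auto)
  also have "\<dots> = n * 2^(n-1) + 2^n"
    using card_image[OF ig] card_image[OF ih] cSig by (simp add: card_Pow)
  finally show ?thesis using card_mono[OF finite_Rch sub] by simp
qed

abbreviation UA :: "nat \<Rightarrow> (st \<times> st set, nat) aut" where
  "UA n \<equiv> underlying (Tn' n)"

lemma ustep: "1 \<le> n \<Longrightarrow> subset_step (UA n) P a = {q. \<exists>p\<in>P. E n a p q}"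
  unfolding subset_step_def underlying_def by (simp add: Tn'_trans E_def)

lemma UA_inits: "1 \<le> n \<Longrightarrow> inits (UA n) = {(S,{})}"
  unfolding underlying_def by (simp add: Tn'_inits)

definition Qp :: "(st \<times> st set) set \<Rightarrow> (nat \<times> nat set) set" where
  "Qp P = {(k, I). \<exists>b. (Q k, Q`I \<union> fl b) \<in> P}"

definition mapP :: "(nat \<Rightarrow> nat) \<Rightarrow> (nat \<times> nat set) set \<Rightarrow> (nat \<times> nat set) set" where
  "mapP f X = (\<lambda>(k, I). (f k, f ` I)) ` X"

definition chain :: "nat \<Rightarrow> (nat \<Rightarrow> nat) \<Rightarrow> (nat \<times> nat set) set" where
  "chain n p = (\<lambda>i. (p i, p ` {1..i-1})) ` {1..n}"

lemma mapP_comp: "mapP (f \<circ> g) X = mapP f (mapP g X)"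
  unfolding mapP_def image_image by (rule image_cong) (auto simp: image_comp)

lemma mapP_id: "mapP id X = X"
  unfolding mapP_def by (simp add: case_prod_unfold)

lemma chain_comp: "chain n (f \<circ> p) = mapP f (chain n p)"
  unfolding chain_def mapP_def image_image by (simp add: image_comp)

lemma Qp_step: assumes n1: "1 \<le> n" and P: "P \<subseteq> Rch n" "(S,{}) \<notin> P" and a: "1 \<le> a" "a \<le> n"
  shows "Qp (subset_step (UA n) P a) = mapP (sg a) (Qp P)"
proof (rule set_eqI)
  fix z :: "nat \<times> nat set"
  obtain k' I' where z: "z = (k', I')" by (cases z)
  show "z \<in> Qp (subset_step (UA n) P a) \<longleftrightarrow> z \<in> mapP (sg a) (Qp P)"
  proof
    assume "z \<in> Qp (subset_step (UA n) P a)"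
    then obtain b' p where p: "p \<in> P" "E n a p (Q k', Q`I' \<union> fl b')"
      unfolding z Qp_def ustep[OF n1] by auto
    have pR: "p \<in> Rch n" using p(1) P(1) by blast
    from Rch_shape[OF pR] show "z \<in> mapP (sg a) (Qp P)" unfolding shape_def
    proof (elim disjE exE conjE)
      assume "p = (S, {})" then show ?thesis using p(1) P(2) by simp
    next
      fix Y assume "p = (Fin, Q ` Y)" then show ?thesis using p(2) E_F by simp
    next
      fix k I b assume pk: "p = (Q k, Q ` I \<union> fl b)" and g: "good n k I"
      have r: "(Q k, Q ` I \<union> fl b) \<in> Rch n" using pR pk by simp
      have "(Q k', Q`I' \<union> fl b') = (Q (sg a k), Q`sg a`I \<union> fl (\<exists>m\<in>I. a \<le> m))"
        using p(2) unfolding pk E_Q[OF g r] by auto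
      then have "k' = sg a k" "I' = sg a ` I" by auto
      moreover have "(k, I) \<in> Qp P" unfolding Qp_def using p(1) pk by auto
      ultimately show ?thesis unfolding z mapP_def by force
    qed
  next
    assume "z \<in> mapP (sg a) (Qp P)"
    then obtain k I b where kI: "k' = sg a k" "I' = sg a ` I" "(Q k, Q`I \<union> fl b) \<in> P"
      unfolding z mapP_def Qp_def by auto
    have r: "(Q k, Q ` I \<union> fl b) \<in> Rch n" using kI(3) P(1) by blast
    have g: "good n k I" by (rule good_of_Rch[OF r])
    have "E n a (Q k, Q ` I \<union> fl b) (Q (sg a k), Q`sg a`I \<union> fl (\<exists>m\<in>I. a \<le> m))"
      by (rule E_Qp[OF g r a])
    then have "(Q (sg a k), Q`sg a`I \<union> fl (\<exists>m\<in>I. a \<le> m)) \<in> subset_step (UA n) P a"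
      unfolding ustep[OF n1] using kI(3) by blast
    then show "z \<in> Qp (subset_step (UA n) P a)" unfolding z Qp_def kI(1,2) by blast
  qed
qed

lemma ustep_Rch: "1 \<le> n \<Longrightarrow> subset_step (UA n) P a \<subseteq> Rch n"
  unfolding ustep using E_Rch by blast

lemma ustep_notS: "1 \<le> n \<Longrightarrow> (S,{}) \<notin> subset_step (UA n) P a"
  unfolding ustep using E_notS by fastforce

lemma chain_inj: assumes p: "p permutes {1..n}" and q: "q permutes {1..n}" and e: "chain n p = chain n q"
  shows "p = q"
proof
  fix i
  show "p i = q i"
  proof (cases "i \<in> {1..n}")
    case False then show ?thesis using permutes_not_in[OF p False] permutes_not_in[OF q False] by simp
  next
    case True
    have "(p i, p ` {1..i-1}) \<in> chain n q" using e True unfolding chain_def by blast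
    then obtain i' where i': "i' \<in> {1..n}" "p i = q i'" "p ` {1..i-1} = q ` {1..i'-1}"
      unfolding chain_def by auto
    have "card (p ` {1..i-1}) = i - 1"
      using card_image[OF inj_on_subset[OF permutes_inj[OF p] subset_UNIV]] by simp
    moreover have "card (q ` {1..i'-1}) = i' - 1"
      using card_image[OF inj_on_subset[OF permutes_inj[OF q] subset_UNIV]] by simp
    ultimately have "i - 1 = i' - 1" using i'(3) by simp
    moreover have "1 \<le> i" "1 \<le> i'" using True i'(1) by auto
    ultimately have "i = i'" by linarith
    then show ?thesis using i'(2) by simp
  qed
qed

abbreviation SD2 :: "nat \<Rightarrow> (st \<times> st set) set set" where
  "SD2 n \<equiv> subset_det_states {1..n} (UA n)"

definition T2 :: "nat \<Rightarrow> (nat \<times> nat set) set \<Rightarrow> bool" where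
  "T2 n X \<longleftrightarrow> (\<exists>P. P \<in> SD2 n \<and> P \<subseteq> Rch n \<and> (S,{}) \<notin> P \<and> Qp P = X)"

lemma T2_sg: assumes n1: "1 \<le> n" and T: "T2 n X" and j: "1 \<le> j" "j \<le> n" shows "T2 n (mapP (sg j) X)"
proof -
  obtain P where P: "P \<in> SD2 n" "P \<subseteq> Rch n" "(S,{}) \<notin> P" "Qp P = X" using T unfolding T2_def by blast
  have "subset_step (UA n) P j \<in> SD2 n" using P(1) j by (intro subset_det_states.step) auto
  moreover note ustep_Rch[OF n1] ustep_notS[OF n1]
  moreover have "Qp (subset_step (UA n) P j) = mapP (sg j) X" using Qp_step[OF n1 P(2,3) j] P(4) by simp
  ultimately show ?thesis unfolding T2_def by blast
qed

lemma T2_tp: assumes n1: "1 \<le> n" and T: "T2 n X" and ab: "1 \<le> a" "a \<le> n" "1 \<le> b" "b \<le> n"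
  shows "T2 n (mapP (Transposition.transpose a b) X)"
proof (cases "a = b")
  case True then show ?thesis using T by (simp add: mapP_id)
next
  case False
  from tp_cases[OF False] show ?thesis
  proof (elim disjE conjE)
    assume "Transposition.transpose a b = sg b" then show ?thesis using T2_sg[OF n1 T] ab by simp
  next
    assume "Transposition.transpose a b = sg a" then show ?thesis using T2_sg[OF n1 T] ab by simp
  next
    assume h: "Transposition.transpose a b = sg a \<circ> sg b \<circ> sg a"
    have "T2 n (mapP (sg a) (mapP (sg b) (mapP (sg a) X)))" using T2_sg[OF n1] T ab by blast
    then show ?thesis unfolding h mapP_comp by simp
  qed
qed

definition P1 :: "nat \<Rightarrow> (st \<times> st set) set" where
  "P1 n = subset_step (UA n) {(S,{})} 1"

lemma P1_eq: assumes n1: "1 \<le> n" shows "P1 n = (\<lambda>i. (Q i, Q`{1..i-1})) ` {1..n}"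
proof -
  have "P1 n = {q. E n 1 (S,{}) q}" unfolding P1_def ustep[OF n1] by simp
  also have "\<dots> = {q. \<exists>i. 1 \<le> i \<and> i \<le> n \<and> q = (Q i, Q`{1..i-1})}" using E_S[of n 1] n1 by simp
  also have "\<dots> = (\<lambda>i. (Q i, Q`{1..i-1})) ` {1..n}" by auto
  finally show ?thesis .
qed

lemma P1_SD2: assumes n1: "1 \<le> n" shows "P1 n \<in> SD2 n"
proof -
  have "inits (UA n) \<in> SD2 n" by (rule subset_det_states.init)
  then have "{(S,{})} \<in> SD2 n" unfolding UA_inits[OF n1] .
  then show ?thesis unfolding P1_def by (rule subset_det_states.step) (use n1 in simp)
qed

lemma Qp_P1: assumes "1 \<le> n" shows "Qp (P1 n) = chain n id"
proof (rule set_eqI)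
  fix z :: "nat \<times> nat set"
  obtain k I where z: "z = (k, I)" by (cases z)
  have "(\<exists>b. (Q k, Q ` I \<union> fl b) \<in> P1 n) \<longleftrightarrow> (\<exists>i\<in>{1..n}. k = i \<and> I = {1..i-1})"
  proof
    assume "\<exists>b. (Q k, Q ` I \<union> fl b) \<in> P1 n"
    then obtain b i where i: "i \<in> {1..n}" "(Q k, Q ` I \<union> fl b) = (Q i, Q`{1..i-1} \<union> fl False)"
      unfolding P1_eq[OF assms] by (auto simp: fl_def)
    then show "\<exists>i\<in>{1..n}. k = i \<and> I = {1..i-1}" by auto
  next
    assume "\<exists>i\<in>{1..n}. k = i \<and> I = {1..i-1}"
    then have "(Q k, Q ` I \<union> fl False) \<in> P1 n" unfolding P1_eq[OF assms] by (auto simp: fl_def)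
    then show "\<exists>b. (Q k, Q ` I \<union> fl b) \<in> P1 n" by blast
  qed
  then show "z \<in> Qp (P1 n) \<longleftrightarrow> z \<in> chain n id" unfolding z Qp_def chain_def by auto
qed

lemma P1_props: "1 \<le> n \<Longrightarrow> P1 n \<subseteq> Rch n \<and> (S,{}) \<notin> P1 n"
  unfolding P1_def using ustep_Rch ustep_notS by blast

lemma T2_perm: assumes n1: "1 \<le> n" and p: "p permutes {1..n}" shows "T2 n (chain n p)"
  using p finite_atLeastAtMost[of 1 n]
proof (induction rule: permutes_induct)
  case id
  show ?case unfolding T2_def using P1_SD2[OF n1] P1_props[OF n1] Qp_P1[OF n1] by blast
next
  case (swap a b p)
  then show ?case unfolding chain_comp using T2_tp[OF n1 swap.IH] by auto
qed

lemma SD2_sub0: "P \<in> SD2 n \<Longrightarrow> 1 \<le> n \<Longrightarrow> P \<subseteq> Rch n"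
proof (induction rule: subset_det_states.induct)
  case init then show ?case using UA_inits S_Rch by simp
next
  case (step P a) then show ?case using ustep_Rch by blast
qed

lemma finite_SD2: "1 \<le> n \<Longrightarrow> finite (SD2 n)"
proof -
  assume n1: "1 \<le> n"
  have "SD2 n \<subseteq> Pow (Rch n)" using SD2_sub0 n1 by blast
  then show ?thesis using finite_Rch by (rule finite_subset[OF _ finite_Pow_iff[THEN iffD2]])
qed

lemma mapP_sg1: "mapP (sg 1) X = X"
proof -
  have "sg 1 = id" by (simp add: fun_eq_iff sg1)
  then show ?thesis by (simp add: mapP_id)
qed

lemma chain_ne: "1 \<le> n \<Longrightarrow> chain n p \<noteq> {}"
  unfolding chain_def by auto

lemma part2_card: assumes n1: "1 \<le> n" shows "fact n + 2 \<le> card (SD2 n)"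
proof -
  define Pi where "Pi = {p. p permutes {1..n}}"
  define F where "F = (\<lambda>p. SOME P. P \<in> SD2 n \<and> P \<subseteq> Rch n \<and> (S,{}) \<notin> P \<and> Qp P = chain n p)"
  have Fp: "F p \<in> SD2 n \<and> F p \<subseteq> Rch n \<and> (S,{}) \<notin> F p \<and> Qp (F p) = chain n p" if "p \<in> Pi" for p
  proof -
    have "T2 n (chain n p)" using T2_perm[OF n1] that unfolding Pi_def by simp
    then have "\<exists>P. P \<in> SD2 n \<and> P \<subseteq> Rch n \<and> (S,{}) \<notin> P \<and> Qp P = chain n p" unfolding T2_def .
    then show ?thesis unfolding F_def by (rule someI_ex)
  qed
  have idPi: "id \<in> Pi" unfolding Pi_def by simp
  have cPi: "card Pi = fact n" unfolding Pi_def by (rule card_permutations) simp_all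
  have fPi: "finite Pi" unfolding Pi_def by (rule finite_permutations) simp
  have injF: "inj_on F (Pi - {id})"
  proof (rule inj_onI)
    fix p q assume p: "p \<in> Pi - {id}" and q: "q \<in> Pi - {id}" and e: "F p = F q"
    have "chain n p = chain n q" using Fp[of p] Fp[of q] p q e by auto
    then show "p = q" using chain_inj p q unfolding Pi_def by blast
  qed
  define Fam where "Fam = F ` (Pi - {id})"
  have cFam: "card Fam = fact n - 1" unfolding Fam_def card_image[OF injF]
    using cPi idPi fPi by (simp add: card_Diff_singleton)
  define P2 where "P2 = subset_step (UA n) (P1 n) 1"
  have P1p: "P1 n \<subseteq> Rch n" "(S,{}) \<notin> P1 n" "Qp (P1 n) = chain n id" "P1 n \<in> SD2 n"
    using P1_props[OF n1] Qp_P1[OF n1] P1_SD2[OF n1] by auto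
  have P2p: "P2 \<subseteq> Rch n" "(S,{}) \<notin> P2" "Qp P2 = chain n id" "P2 \<in> SD2 n"
    unfolding P2_def using ustep_Rch[OF n1] ustep_notS[OF n1] Qp_step[OF n1 P1p(1,2) order.refl n1] P1p(3)
      mapP_sg1 subset_det_states.step[OF P1p(4), of 1] n1 by auto
  have Fin1: "(Fin, Q`{1}) \<in> P2"
  proof -
    have inP1: "(Q 1, Q`{} \<union> fl False) \<in> P1 n" unfolding P1_eq[OF n1] using n1 by (force simp: fl_def)
    have r: "(Q 1, Q`{} \<union> fl False) \<in> Rch n" using inP1 P1p(1) by blast
    have g: "good n 1 {}" using n1 unfolding good_def by simp
    have "E n 1 (Q 1, Q`{} \<union> fl False) (Fin, Q`(sg 1 ` insert 1 {}))"
      by (rule E_Qf[OF g r order.refl n1 order.refl]) simp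
    then show ?thesis unfolding P2_def ustep[OF n1] using inP1 by (auto simp: sg1)
  qed
  have Fin1': "(Fin, Q`{1}) \<notin> P1 n" unfolding P1_eq[OF n1] by auto
  have P12: "P1 n \<noteq> P2" using Fin1 Fin1' by blast
  have QpS: "Qp {(S,{})} = {}" unfolding Qp_def by auto
  have notF: "X \<notin> Fam" if "Qp X = chain n id" for X
  proof
    assume "X \<in> Fam"
    then obtain p where p: "p \<in> Pi - {id}" "X = F p" unfolding Fam_def by blast
    then have "chain n p = chain n id" using Fp[of p] that by auto
    then have "p = id" using chain_inj[of p n id] p unfolding Pi_def by simp
    then show False using p by simp
  qed
  have S_notF: "{(S,{})} \<notin> Fam"
  proof
    assume "{(S,{})} \<in> Fam"
    then obtain p where p: "p \<in> Pi - {id}" "{(S,{})} = F p" unfolding Fam_def by blast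
    then show False using Fp[of p] by auto
  qed
  have fFam: "finite Fam" unfolding Fam_def using fPi by simp
  have sub: "insert (P1 n) (insert P2 (insert {(S,{})} Fam)) \<subseteq> SD2 n"
  proof -
    have "Fam \<subseteq> SD2 n" unfolding Fam_def using Fp by blast
    moreover have "{(S,{})} \<in> SD2 n" using subset_det_states.init[where A="UA n" and Sigma="{1..n}"] UA_inits[OF n1] by simp
    ultimately show ?thesis using P1p(4) P2p(4) by blast
  qed
  have "card (insert (P1 n) (insert P2 (insert {(S,{})} Fam))) = card Fam + 3"
  proof -
    have d3: "{(S,{})} \<notin> Fam" by (rule S_notF)
    have d2: "P2 \<notin> insert {(S,{})} Fam" using notF[OF P2p(3)] P2p(2) by auto
    have d1: "P1 n \<notin> insert P2 (insert {(S,{})} Fam)" using notF[OF P1p(3)] P1p(2) P12 by auto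
    show ?thesis using fFam d1 d2 d3 by (simp add: card_insert_disjoint)
  qed
  moreover have "(1::nat) \<le> fact n" by (rule fact_ge_1)
  ultimately have "fact n + 2 = card (insert (P1 n) (insert P2 (insert {(S,{})} Fam)))" using cFam by simp
  also have "\<dots> \<le> card (SD2 n)" by (rule card_mono[OF finite_SD2[OF n1] sub])
  finally show ?thesis .
qed

abbreviation RA :: "nat \<Rightarrow> (st \<times> st set, nat) aut" where
  "RA n \<equiv> reversal (UA n)"

abbreviation SD3 :: "nat \<Rightarrow> (st \<times> st set) set set" where
  "SD3 n \<equiv> subset_det_states {1..n} (RA n)"

definition Init3 :: "nat \<Rightarrow> (st \<times> st set) set" where
  "Init3 n = {x. x \<in> Rch n \<and> fst x = Fin \<and> Fin \<notin> snd x}"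

definition A :: "nat \<Rightarrow> nat set \<Rightarrow> (st \<times> st set) set" where
  "A n Z = {x \<in> Rch n. \<exists>k N. x = (Q k, N) \<and> k \<in> Z \<and> N \<inter> Q`Z = {}}"

definition supp :: "(st \<times> st set) set \<Rightarrow> nat set" where
  "supp P = {k. \<exists>N. (Q k, N) \<in> P}"

lemma rstep: "1 \<le> n \<Longrightarrow> subset_step (RA n) P a = {q. \<exists>p\<in>P. E n a q p}"
  unfolding subset_step_def reversal_def underlying_def by (auto simp: Tn'_trans E_def)

lemma RA_inits: "1 \<le> n \<Longrightarrow> inits (RA n) = Init3 n"
  unfolding reversal_def underlying_def Init3_def by (simp add: Tn'_finals)

lemma rstep_init: assumes n1: "1 \<le> n" and j: "1 \<le> j" "j \<le> n"
  shows "subset_step (RA n) (Init3 n) j = A n {j..n}"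
proof (rule set_eqI, rule iffI)
  fix q assume "q \<in> subset_step (RA n) (Init3 n) j"
  then obtain p where p: "p \<in> Init3 n" "E n j q p" unfolding rstep[OF n1] by blast
  have qR: "q \<in> Rch n" using p(2) E_Rch by blast
  have pF: "fst p = Fin" using p(1) unfolding Init3_def by simp
  from Rch_shape[OF qR] show "q \<in> A n {j..n}" unfolding shape_def
  proof (elim disjE exE conjE)
    assume "q = (S, {})" then have "E n j (S,{}) p" using p(2) by simp
    then show ?thesis using pF unfolding E_S by auto
  next
    fix Y assume "q = (Fin, Q ` Y)" then show ?thesis using p(2) E_F by simp
  next
    fix k I b assume qk: "q = (Q k, Q ` I \<union> fl b)" and g: "good n k I"
    have r: "(Q k, Q ` I \<union> fl b) \<in> Rch n" using qR qk by simp
    have "j \<le> k \<and> (\<forall>m\<in>I. m < j)" using p(2) pF unfolding qk E_Q[OF g r] by auto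
    moreover have "k \<le> n" using g unfolding good_def by simp
    ultimately show ?thesis unfolding A_def using qR qk by (auto simp: fl_def)
  qed
next
  fix x assume "x \<in> A n {j..n}"
  then obtain k N where x: "x \<in> Rch n" "x = (Q k, N)" "k \<in> {j..n}" "N \<inter> Q`{j..n} = {}"
    unfolding A_def by blast
  obtain I b where N: "N = Q`I \<union> fl b" "good n k I" using Q_Rch_form x(1,2) by blast
  have r: "(Q k, Q`I \<union> fl b) \<in> Rch n" using x N by simp
  have lt: "\<forall>m\<in>I. m < j"
  proof
    fix m assume m: "m \<in> I"
    then have "m \<le> n" using N(2) unfolding good_def by auto
    moreover have "m \<notin> {j..n}" using x(4) m N(1) by auto
    ultimately show "m < j" by simp
  qed
  have jk: "j \<le> k" using x(3) by simp
  have e: "E n j (Q k, Q`I \<union> fl b) (Fin, Q`(sg j`insert k I))" by (rule E_Qf[OF N(2) r j jk lt])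
  then have "(Fin, Q`(sg j`insert k I)) \<in> Init3 n" unfolding Init3_def using E_Rch by auto
  then show "x \<in> subset_step (RA n) (Init3 n) j" unfolding rstep[OF n1] using e x(2) N(1) by blast
qed

lemma mem_sg_img: "x \<in> sg j ` Z \<longleftrightarrow> sg j x \<in> Z"
proof
  assume "x \<in> sg j ` Z" then obtain z where "z \<in> Z" "x = sg j z" by blast
  then show "sg j x \<in> Z" by simp
next
  assume "sg j x \<in> Z" then have "sg j (sg j x) \<in> sg j ` Z" by (rule imageI)
  then show "x \<in> sg j ` Z" by simp
qed

lemma disj_sg: "I \<inter> sg j ` Z = {} \<longleftrightarrow> sg j ` I \<inter> Z = {}"
  by (auto simp: mem_sg_img)

lemma sg_img_eq: "sg j ` X = Y \<longleftrightarrow> X = sg j ` Y"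
  by (auto simp: image_iff)

lemma rstep_A: assumes n1: "1 \<le> n" and Z: "Z \<subseteq> {1..n}" "Z \<noteq> {}"
  and P: "A n Z \<subseteq> P" "P \<subseteq> insert (S,{}) (A n Z)" and j: "1 \<le> j" "j \<le> n"
  shows "subset_step (RA n) P j = insert (S,{}) (A n (sg j ` Z))"
proof (rule set_eqI, rule iffI)
  fix q assume "q \<in> subset_step (RA n) P j"
  then obtain p where p: "p \<in> P" "E n j q p" unfolding rstep[OF n1] by blast
  have qR: "q \<in> Rch n" using p(2) E_Rch by blast
  have "fst p \<noteq> S" using E_notS p(2) by blast
  then have pA: "p \<in> A n Z" using p(1) P(2) by auto
  then obtain k' N' where pk: "p = (Q k', N')" "k' \<in> Z" "N' \<inter> Q`Z = {}" unfolding A_def by blast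
  from Rch_shape[OF qR] show "q \<in> insert (S,{}) (A n (sg j ` Z))" unfolding shape_def
  proof (elim disjE exE conjE)
    assume "q = (S, {})" then show ?thesis by simp
  next
    fix Y assume "q = (Fin, Q ` Y)" then show ?thesis using p(2) E_F by simp
  next
    fix k I b assume qk: "q = (Q k, Q ` I \<union> fl b)" and g: "good n k I"
    have r: "(Q k, Q ` I \<union> fl b) \<in> Rch n" using qR qk by simp
    have "p = (Q (sg j k), Q`sg j`I \<union> fl (\<exists>m\<in>I. j \<le> m))" using p(2) pk(1) unfolding qk E_Q[OF g r] by auto
    then have kk: "k' = sg j k" and NN: "N' = Q`sg j`I \<union> fl (\<exists>m\<in>I. j \<le> m)" using pk(1) by auto
    have "k \<in> sg j ` Z" using kk pk(2) by (simp add: mem_sg_img)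
    moreover have "(Q`I \<union> fl b) \<inter> Q`(sg j ` Z) = {}"
    proof -
      have "sg j ` I \<inter> Z = {}" using pk(3) NN by (auto simp: fl_def)
      then have "I \<inter> sg j ` Z = {}" by (simp add: disj_sg)
      then show ?thesis by (auto simp: fl_def)
    qed
    ultimately show ?thesis unfolding A_def using qR qk by blast
  qed
next
  fix x assume x: "x \<in> insert (S,{}) (A n (sg j ` Z))"
  show "x \<in> subset_step (RA n) P j"
  proof (cases "x = (S,{})")
    case True
    define m where "m = Min Z"
    have fZ: "finite Z" using Z(1) finite_subset by blast
    have m: "m \<in> Z" "\<forall>z\<in>Z. m \<le> z" unfolding m_def using fZ Z(2) by auto
    have mn: "1 \<le> m" "m \<le> n" using m(1) Z(1) by auto
    have e: "E n j (S,{}) (Q m, Q`{1..m-1})" unfolding E_S using mn j by auto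
    have "Q`{1..m-1} \<inter> Q`Z = {}"
    proof -
      have "{1..m-1} \<inter> Z = {}" using m(2) mn by fastforce
      then show ?thesis by auto
    qed
    then have "(Q m, Q`{1..m-1}) \<in> A n Z" unfolding A_def using e E_Rch m(1) by blast
    then show ?thesis unfolding rstep[OF n1] True using P(1) e by blast
  next
    case False
    then have xA: "x \<in> A n (sg j ` Z)" using x by simp
    then obtain k N where xk: "x \<in> Rch n" "x = (Q k, N)" "k \<in> sg j ` Z" "N \<inter> Q`(sg j ` Z) = {}"
      unfolding A_def by blast
    obtain I b where N: "N = Q`I \<union> fl b" "good n k I" using Q_Rch_form xk(1,2) by blast
    have r: "(Q k, Q`I \<union> fl b) \<in> Rch n" using xk N by simp
    have e: "E n j (Q k, Q`I \<union> fl b) (Q (sg j k), Q`sg j`I \<union> fl (\<exists>m\<in>I. j \<le> m))"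
      by (rule E_Qp[OF N(2) r j])
    have "sg j k \<in> Z" using xk(3) by auto
    moreover have "(Q`sg j`I \<union> fl (\<exists>m\<in>I. j \<le> m)) \<inter> Q`Z = {}"
    proof -
      have "I \<inter> sg j ` Z = {}" using xk(4) N(1) by auto
      then have "sg j ` I \<inter> Z = {}" by (simp add: disj_sg)
      then show ?thesis by (auto simp: fl_def)
    qed
    ultimately have "(Q (sg j k), Q`sg j`I \<union> fl (\<exists>m\<in>I. j \<le> m)) \<in> A n Z" unfolding A_def using e E_Rch by blast
    then show ?thesis unfolding rstep[OF n1] using P(1) e xk(2) N(1) by blast
  qed
qed

lemma SD3_sub0: "P \<in> SD3 n \<Longrightarrow> 1 \<le> n \<Longrightarrow> P \<subseteq> Rch n"
proof (induction rule: subset_det_states.induct)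
  case init then show ?case using RA_inits unfolding Init3_def by auto
next
  case (step P a) then show ?case unfolding rstep[OF step.prems] using E_Rch by blast
qed

lemma finite_SD3: "1 \<le> n \<Longrightarrow> finite (SD3 n)"
proof -
  assume n1: "1 \<le> n"
  have "SD3 n \<subseteq> Pow (Rch n)" using SD3_sub0 n1 by blast
  then show ?thesis using finite_Rch by (rule finite_subset[OF _ finite_Pow_iff[THEN iffD2]])
qed

lemma Init3_SD3: "1 \<le> n \<Longrightarrow> Init3 n \<in> SD3 n"
  using subset_det_states.init[where A="RA n" and Sigma="{1..n}"] RA_inits by simp

lemma Aj_SD3: assumes n1: "1 \<le> n" and j: "1 \<le> j" "j \<le> n" shows "A n {j..n} \<in> SD3 n"
proof -
  have "subset_step (RA n) (Init3 n) j \<in> SD3 n"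
    by (rule subset_det_states.step[OF Init3_SD3[OF n1]]) (use j in simp)
  then show ?thesis unfolding rstep_init[OF n1 j] .
qed

definition T3 :: "nat \<Rightarrow> nat set \<Rightarrow> bool" where
  "T3 n Z \<longleftrightarrow> Z \<subseteq> {1..n} \<and> Z \<noteq> {} \<and> insert (S,{}) (A n Z) \<in> SD3 n"

lemma SAj_SD3: assumes n1: "1 \<le> n" and j: "1 \<le> j" "j \<le> n" shows "T3 n {j..n}"
proof -
  have Z: "{j..n} \<subseteq> {1..n}" "{j..n} \<noteq> {}" using j by auto
  have "subset_step (RA n) (A n {j..n}) 1 \<in> SD3 n"
    by (rule subset_det_states.step[OF Aj_SD3[OF n1 j]]) (use n1 in simp)
  moreover have "subset_step (RA n) (A n {j..n}) 1 = insert (S,{}) (A n (sg 1 ` {j..n}))"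
    by (rule rstep_A[OF n1 Z order.refl _ order.refl n1]) auto
  moreover have "sg 1 ` {j..n} = {j..n}" by (simp add: sg1)
  ultimately show ?thesis unfolding T3_def using Z by simp
qed

lemma T3_sg: assumes n1: "1 \<le> n" and T: "T3 n Z" and j: "1 \<le> j" "j \<le> n" shows "T3 n (sg j ` Z)"
proof -
  have Z: "Z \<subseteq> {1..n}" "Z \<noteq> {}" and P: "insert (S,{}) (A n Z) \<in> SD3 n" using T unfolding T3_def by auto
  have "subset_step (RA n) (insert (S,{}) (A n Z)) j \<in> SD3 n"
    by (rule subset_det_states.step[OF P]) (use j in simp)
  moreover have "subset_step (RA n) (insert (S,{}) (A n Z)) j = insert (S,{}) (A n (sg j ` Z))"
    by (rule rstep_A[OF n1 Z _ order.refl j]) auto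
  moreover have "sg j ` Z \<subseteq> {1..n}" by (rule sg_img_sub[OF Z(1) j])
  ultimately show ?thesis unfolding T3_def using Z by simp
qed

lemma T3_all: assumes n1: "1 \<le> n" and Z: "Z \<subseteq> {1..n}" "Z \<noteq> {}" shows "T3 n Z"
proof -
  have fZ: "finite Z" using Z(1) finite_subset by blast
  define c where "c = card Z"
  have c1: "1 \<le> c" unfolding c_def using fZ Z(2) by (simp add: Suc_leI card_gt_0_iff)
  have cn: "c \<le> n" unfolding c_def using card_mono[OF _ Z(1)] by simp
  define j where "j = n + 1 - c"
  have j: "1 \<le> j" "j \<le> n" unfolding j_def using c1 cn by auto
  have cj: "card {j..n} = c" unfolding j_def using c1 cn by simp
  show ?thesis
  proof (rule exch[of "{1..n}" "{j..n}" "T3 n"])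
    show "finite {1..n}" by simp
    show "{j..n} \<subseteq> {1..n}" using j by auto
    show "T3 n {j..n}" by (rule SAj_SD3[OF n1 j])
    show "Z \<subseteq> {1..n}" by (rule Z(1))
    show "card Z = card {j..n}" using cj unfolding c_def by simp
    fix a b X assume ab: "a \<in> {1..n}" "b \<in> {1..n}" and "X \<subseteq> {1..n}" and TX: "T3 n X"
    have ab': "1 \<le> a" "a \<le> n" "1 \<le> b" "b \<le> n" using ab by auto
    show "T3 n (Transposition.transpose a b ` X)"
      by (rule sg_closure_tp[where P="T3 n" and n=n, OF _ ab' TX]) (rule T3_sg[OF n1])
  qed
qed

lemma supp_A: assumes "Z \<subseteq> {1..n}" shows "supp (A n Z) = Z"
proof (rule set_eqI, rule iffI)
  fix k assume "k \<in> supp (A n Z)" then show "k \<in> Z" unfolding supp_def A_def by auto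
next
  fix k assume k: "k \<in> Z"
  have g: "good n k {}" using k assms unfolding good_def by auto
  have "(Q k, Q`{}) \<in> Rch n" by (rule FF[OF g]) simp
  then have "(Q k, {}) \<in> A n Z" unfolding A_def using k by simp
  then show "k \<in> supp (A n Z)" unfolding supp_def by blast
qed

lemma supp_ins: "supp (insert (S,{}) X) = supp X" unfolding supp_def by auto
lemma supp_Init3: "supp (Init3 n) = {}" unfolding supp_def Init3_def by auto
lemma S_notin_A: "(S,{}) \<notin> A n Z" unfolding A_def by auto
lemma S_notin_Init3: "(S,{}) \<notin> Init3 n" unfolding Init3_def by auto

lemma part3_card: assumes n1: "1 \<le> n" shows "2^n + n \<le> card (SD3 n)"
proof -
  define key where "key = (\<lambda>P::(st \<times> st set) set. ((S,{}) \<in> P, supp P))"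
  define K1 where "K1 = (\<lambda>j. (False, {j..n})) ` {1..n}"
  define K2 where "K2 = (\<lambda>Z. (True, Z)) ` (Pow {1..n} - {{}})"
  define K3 where "K3 = insert (False, {}) (K1 \<union> K2)"
  have sub: "K3 \<subseteq> key ` SD3 n"
  proof
    fix x assume "x \<in> K3"
    then consider "x = (False, {})" | "x \<in> K1" | "x \<in> K2" unfolding K3_def by blast
    then show "x \<in> key ` SD3 n"
    proof cases
      case 1
      have "key (Init3 n) = (False, {})" unfolding key_def using S_notin_Init3 supp_Init3 by simp
      then show ?thesis using 1 Init3_SD3[OF n1] by (metis imageI)
    next
      case 2
      then obtain j where j: "j \<in> {1..n}" "x = (False, {j..n})" unfolding K1_def by blast
      have "key (A n {j..n}) = (False, {j..n})" unfolding key_def using S_notin_A supp_A[of "{j..n}" n] j by auto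
      then show ?thesis using j Aj_SD3[OF n1] by (metis atLeastAtMost_iff imageI)
    next
      case 3
      then obtain Z where Z: "Z \<subseteq> {1..n}" "Z \<noteq> {}" "x = (True, Z)" unfolding K2_def by blast
      have "key (insert (S,{}) (A n Z)) = (True, Z)" unfolding key_def using supp_ins supp_A[OF Z(1)] by simp
      moreover have "insert (S,{}) (A n Z) \<in> SD3 n" using T3_all[OF n1 Z(1,2)] unfolding T3_def by simp
      ultimately show ?thesis using Z(3) by (metis imageI)
    qed
  qed
  have inj1: "inj_on (\<lambda>j. (False, {j..n})) {1..n}"
  proof (rule inj_onI)
    fix j j' assume j: "j \<in> {1..n}" "j' \<in> {1..n}" and e: "(False, {j..n}) = (False, {j'..n})"
    then have e': "{j..n} = {j'..n}" by simp
    have "j \<in> {j'..n}" using j e' by (metis atLeastAtMost_iff order.refl)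
    moreover have "j' \<in> {j..n}" using j e' by (metis atLeastAtMost_iff order.refl)
    ultimately show "j = j'" by simp
  qed
  have inj2: "inj_on (\<lambda>Z. (True, Z)) (Pow {1..n} - {{}})" by (rule inj_onI) simp
  have cK1: "card K1 = n" unfolding K1_def card_image[OF inj1] by simp
  have cK2: "card K2 = 2^n - 1" unfolding K2_def card_image[OF inj2] by (simp add: card_Pow)
  have d12: "K1 \<inter> K2 = {}" unfolding K1_def K2_def by auto
  have nK: "(False, {}) \<notin> K1 \<union> K2" unfolding K1_def K2_def by auto
  have fK: "finite K1" "finite K2" unfolding K1_def K2_def by simp_all
  have "card K3 = 1 + (n + (2^n - 1))" unfolding K3_def
    using card_insert_disjoint[OF _ nK] card_Un_disjoint[OF fK d12] cK1 cK2 fK by simp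
  also have "\<dots> = 2^n + n" using one_le_power[of 2 n] by simp
  finally have cK3: "card K3 = 2^n + n" .
  have "card K3 \<le> card (key ` SD3 n)" by (rule card_mono[OF finite_imageI[OF finite_SD3[OF n1]] sub])
  also have "\<dots> \<le> card (SD3 n)" by (rule card_image_le[OF finite_SD3[OF n1]])
  finally show ?thesis using cK3 by simp
qed

lemma part1_real: assumes n1: "1 \<le> n"
  shows "(2 * real n + 3) * 2 powr (real n - 2) \<le> real (n * 2^(n-1) + 2^n)"
proof -
  obtain m where m: "n = Suc m" using n1 by (cases n) auto
  have e: "(2::real) powr (real n - 2) = 2^n / 4"
  proof -
    have "(2::real) powr (real n - 2) = 2 powr real n / 2 powr 2" by (rule powr_diff)
    also have "(2::real) powr real n = 2^n" by (simp add: powr_realpow)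
    also have "(2::real) powr 2 = 4" by simp
    finally show ?thesis .
  qed
  have "real (n * 2^(n-1) + 2^n) = real n * 2^m + 2 * 2^m" unfolding m by (simp add: algebra_simps)
  moreover have "(2::real)^n / 4 = 2^m / 2" unfolding m by simp
  moreover define t :: real where "t = 2^m"
  ultimately have R: "real (n * 2^(n-1) + 2^n) = real n * t + 2 * t" and L0: "(2::real)^n / 4 = t / 2" by simp_all
  have t0: "0 \<le> t" unfolding t_def by simp
  have "(2 * real n + 3) * (t / 2) = real n * t + 3 / 2 * t" by (simp add: field_simps)
  then show ?thesis unfolding e L0 R using t0 by linarith
qed

theorem proposition9:
  fixes n :: nat
  assumes "1 \<le> n"
  shows "real (card (states (Tn' n))) \<ge> (2 * real n + 3) * 2 powr (real n - 2)
       \<and> card (subset_det_states {1..n} (underlying (Tn' n))) \<ge> fact n + 2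
       \<and> card (subset_det_states {1..n} (reversal (underlying (Tn' n)))) \<ge> 2 ^ n + n"
proof (intro conjI)
  have "real (n * 2^(n-1) + 2^n) \<le> real (card (states (Tn' n)))"
    unfolding Tn'_states[OF assms] using part1_card[OF assms] by linarith
  then show "real (card (states (Tn' n))) \<ge> (2 * real n + 3) * 2 powr (real n - 2)"
    using part1_real[OF assms] by linarith
  show "card (subset_det_states {1..n} (underlying (Tn' n))) \<ge> fact n + 2"
    by (rule part2_card[OF assms])
  show "card (subset_det_states {1..n} (reversal (underlying (Tn' n)))) \<ge> 2 ^ n + n"
    by (rule part3_card[OF assms])
qed

end
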